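(* Let $R$ be a local ring with $1/2\in R$, $H=R^n$, and let $M\subset H\oplus H^*$ be a totally isotropic direct summand of rank $n$ such that the submodule $\{\omega\in\bigwedge H: x\cdot\omega=0\ \forall x\in M\}$ is generated by a single element $s\in\bigwedge^{\mathrm{odd}}H$ (i.e. $M$ lies in the family of maximal isotropic summands not containing $H^*$). Let $s_1\in H$ be the degree-one component of $s$, and let $\lambda(H^* )\subseteq R$ denote the ideal $\{f'(s_1): f'\in H^*\}$ generated by the coordinates of $s_1$. Let $P\colon M\to H^*$ be the restriction to $M$ of the projection $H\oplus H^*\to H^*$. The following are equivalent: (1) There exist a basis $e_1,\dots,e_n$ of $H$ with dual basis $e_1',\dots,e_n'$ of $H^*$ and an $(n-1)\times(n-1)$ skew-symmetric matrix $X$ with entries in $R$ such that $M$ is spanned by $e_1$ together with the $n-1$ elements $e_i'+\sum_{j=2}^n X_{ji}e_j$ for $i=2,\dots,n$ (rows/columns of $X$ indexed by $2,\dots,n$). (2) $\lambda(H^* )=R$. (3) $I_{n-1}(P)=R$, where $I_{n-1}(P)$ is the ideal of $(n-1)\times(n-1)$ minors of $P$.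
   Context: On $H\oplus H^*$ consider the quadratic form $Q(f,f')=f'(f)$; a submodule $M$ is totally isotropic if $Q|_M=0$. The Clifford action of $H\oplus H^*$ on the exterior algebra $\bigwedge H$ is $(f,f')\cdot\omega=f\wedge\omega+\iota_{f'}(\omega)$, where $\iota_{f'}(e_1\wedge\cdots\wedge e_j)=\sum_{i}(-1)^{i-1}f'(e_i)\,e_1\wedge\cdots\wedge\widehat{e_i}\wedge\cdots\wedge e_j$. Write $\bigwedge^{\mathrm{odd}}H=\bigoplus_{k\text{ odd}}\bigwedge^kH$. *)

theory Defs
  imports "HOL-Combinatorics.Permutations"
begin

text \<open>H = R^n is modelled as
  functions nat => R vanishing outside {..<n} (coordinates w.r.t. the standard basis);
  H* is identified with R^n via the standard dual basis, so f'(h) = sum_{i<n} f' i * h i. The exterior algebra of H is modelled as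
  coefficient functions nat set => R (coefficient of e_S, S a subset of {..<n} written in
  increasing order), vanishing on sets not contained in {..<n}.\<close>

definition local_ring :: "'a::comm_ring_1 itself \<Rightarrow> bool" where
  "local_ring _ \<longleftrightarrow> (0::'a) \<noteq> 1 \<and>
     (\<forall>a b::'a. \<not> a dvd 1 \<longrightarrow> \<not> b dvd 1 \<longrightarrow> \<not> (a + b) dvd 1)"

definition Hcar :: "nat \<Rightarrow> (nat \<Rightarrow> 'a::zero) set" where
  "Hcar n = {v. \<forall>i\<ge>n. v i = 0}"

definition HHcar :: "nat \<Rightarrow> ((nat \<Rightarrow> 'a::zero) \<times> (nat \<Rightarrow> 'a)) set" where
  "HHcar n = Hcar n \<times> Hcar n"

definition pzero :: "(nat \<Rightarrow> 'a::zero) \<times> (nat \<Rightarrow> 'a)" where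
  "pzero = (\<lambda>_. 0, \<lambda>_. 0)"

definition padd :: "(nat \<Rightarrow> 'a::plus) \<times> (nat \<Rightarrow> 'a) \<Rightarrow> (nat \<Rightarrow> 'a) \<times> (nat \<Rightarrow> 'a)
     \<Rightarrow> (nat \<Rightarrow> 'a) \<times> (nat \<Rightarrow> 'a)" where
  "padd x y = (\<lambda>i. fst x i + fst y i, \<lambda>i. snd x i + snd y i)"

definition psmul :: "'a::times \<Rightarrow> (nat \<Rightarrow> 'a) \<times> (nat \<Rightarrow> 'a) \<Rightarrow> (nat \<Rightarrow> 'a) \<times> (nat \<Rightarrow> 'a)" where
  "psmul r x = (\<lambda>i. r * fst x i, \<lambda>i. r * snd x i)"

definition vlc :: "(nat \<Rightarrow> 'a::comm_ring_1) \<Rightarrow> (nat \<Rightarrow> nat \<Rightarrow> 'a) \<Rightarrow> nat \<Rightarrow> nat \<Rightarrow> 'a" where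
  "vlc c v m = (\<lambda>i. \<Sum>k<m. c k * v k i)"

definition plc :: "(nat \<Rightarrow> 'a::comm_ring_1) \<Rightarrow> (nat \<Rightarrow> (nat \<Rightarrow> 'a) \<times> (nat \<Rightarrow> 'a)) \<Rightarrow> nat
     \<Rightarrow> (nat \<Rightarrow> 'a) \<times> (nat \<Rightarrow> 'a)" where
  "plc c v m = (vlc c (\<lambda>k. fst (v k)) m, vlc c (\<lambda>k. snd (v k)) m)"

definition is_submod :: "nat \<Rightarrow> ((nat \<Rightarrow> 'a::comm_ring_1) \<times> (nat \<Rightarrow> 'a)) set \<Rightarrow> bool" where
  "is_submod n M \<longleftrightarrow> M \<subseteq> HHcar n \<and> pzero \<in> M \<and>
     (\<forall>x\<in>M. \<forall>y\<in>M. padd x y \<in> M) \<and> (\<forall>r. \<forall>x\<in>M. psmul r x \<in> M)"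

definition is_direct_summand :: "nat \<Rightarrow> ((nat \<Rightarrow> 'a::comm_ring_1) \<times> (nat \<Rightarrow> 'a)) set \<Rightarrow> bool" where
  "is_direct_summand n M \<longleftrightarrow> is_submod n M \<and>
     (\<exists>N. is_submod n N \<and> M \<inter> N = {pzero} \<and>
          (\<forall>x\<in>HHcar n. \<exists>m\<in>M. \<exists>k\<in>N. x = padd m k))"

definition is_pbasis :: "((nat \<Rightarrow> 'a::comm_ring_1) \<times> (nat \<Rightarrow> 'a)) set \<Rightarrow> nat
     \<Rightarrow> (nat \<Rightarrow> (nat \<Rightarrow> 'a) \<times> (nat \<Rightarrow> 'a)) \<Rightarrow> bool" where
  "is_pbasis M m b \<longleftrightarrow> (\<forall>k<m. b k \<in> M) \<and>
     (\<forall>x\<in>M. \<exists>!c. (\<forall>k\<ge>m. c k = 0) \<and> x = plc c b m)"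

definition is_Hbasis :: "nat \<Rightarrow> (nat \<Rightarrow> nat \<Rightarrow> 'a::comm_ring_1) \<Rightarrow> bool" where
  "is_Hbasis n e \<longleftrightarrow> (\<forall>k<n. e k \<in> Hcar n) \<and>
     (\<forall>x\<in>Hcar n. \<exists>!c. (\<forall>k\<ge>n. c k = 0) \<and> x = vlc c e n)"

definition is_dual_basis :: "nat \<Rightarrow> (nat \<Rightarrow> nat \<Rightarrow> 'a::comm_ring_1) \<Rightarrow> (nat \<Rightarrow> nat \<Rightarrow> 'a) \<Rightarrow> bool" where
  "is_dual_basis n e e' \<longleftrightarrow> (\<forall>k<n. e' k \<in> Hcar n) \<and>
     (\<forall>i<n. \<forall>j<n. (\<Sum>k<n. e' i k * e j k) = (if i = j then 1 else 0))"

definition Qform :: "nat \<Rightarrow> (nat \<Rightarrow> 'a::comm_ring_1) \<times> (nat \<Rightarrow> 'a) \<Rightarrow> 'a" where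
  "Qform n x = (\<Sum>i<n. snd x i * fst x i)"

definition totally_isotropic :: "nat \<Rightarrow> ((nat \<Rightarrow> 'a::comm_ring_1) \<times> (nat \<Rightarrow> 'a)) set \<Rightarrow> bool" where
  "totally_isotropic n M \<longleftrightarrow> (\<forall>x\<in>M. Qform n x = 0)"

definition ext_alg :: "nat \<Rightarrow> (nat set \<Rightarrow> 'a::zero) set" where
  "ext_alg n = {w. \<forall>S. \<not> S \<subseteq> {..<n} \<longrightarrow> w S = 0}"

definition ext_odd :: "nat \<Rightarrow> (nat set \<Rightarrow> 'a::zero) set" where
  "ext_odd n = {w \<in> ext_alg n. \<forall>S. even (card S) \<longrightarrow> w S = 0}"

text \<open>f \<wedge> w, using e_i \<wedge> e_S = (-1)^{#{j\<in>S. j<i}} e_{S \<union> {i}}.\<close>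
definition wedge1 :: "nat \<Rightarrow> (nat \<Rightarrow> 'a::comm_ring_1) \<Rightarrow> (nat set \<Rightarrow> 'a) \<Rightarrow> nat set \<Rightarrow> 'a" where
  "wedge1 n f w = (\<lambda>T. if T \<subseteq> {..<n} then
      (\<Sum>i\<in>T. (-1) ^ card {j\<in>T. j < i} * f i * w (T - {i})) else 0)"

text \<open>Contraction iota_{f'} w, using
  iota_{f'}(e_S) = sum_{i\<in>S} (-1)^{#{j\<in>S. j<i}} f'(e_i) e_{S - {i}}.\<close>
definition contr :: "nat \<Rightarrow> (nat \<Rightarrow> 'a::comm_ring_1) \<Rightarrow> (nat set \<Rightarrow> 'a) \<Rightarrow> nat set \<Rightarrow> 'a" where
  "contr n f' w = (\<lambda>T. if T \<subseteq> {..<n} then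
      (\<Sum>i\<in>{..<n} - T. (-1) ^ card {j\<in>T. j < i} * f' i * w (insert i T)) else 0)"

definition cliff :: "nat \<Rightarrow> (nat \<Rightarrow> 'a::comm_ring_1) \<times> (nat \<Rightarrow> 'a) \<Rightarrow> (nat set \<Rightarrow> 'a) \<Rightarrow> nat set \<Rightarrow> 'a" where
  "cliff n x w = (\<lambda>T. wedge1 n (fst x) w T + contr n (snd x) w T)"

definition detk :: "nat \<Rightarrow> (nat \<Rightarrow> nat \<Rightarrow> 'a::comm_ring_1) \<Rightarrow> 'a" where
  "detk k A = (\<Sum>p | p permutes {..<k}. of_int (sign p) * (\<Prod>i<k. A i (p i)))"

definition ideal_gen :: "'a::comm_ring_1 set \<Rightarrow> 'a set" where
  "ideal_gen G = {x. \<exists>F c. finite F \<and> F \<subseteq> G \<and> x = (\<Sum>g\<in>F. c g * g)}"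

definition minor_ideal :: "nat \<Rightarrow> nat \<Rightarrow> (nat \<Rightarrow> nat \<Rightarrow> 'a::comm_ring_1) \<Rightarrow> 'a set" where
  "minor_ideal n k A = ideal_gen
     {detk k (\<lambda>a c. A (sorted_list_of_set I ! a) (sorted_list_of_set J ! c)) | I J.
        I \<subseteq> {..<n} \<and> J \<subseteq> {..<n} \<and> card I = k \<and> card J = k}"

text \<open>Matrix of P : M \<rightarrow> H*, (f,f') \<mapsto> f', w.r.t. the basis b of M and the standard
  dual basis of H*: column j is the coordinate vector of P(b_j).\<close>
definition Pmatrix :: "(nat \<Rightarrow> (nat \<Rightarrow> 'a) \<times> (nat \<Rightarrow> 'a)) \<Rightarrow> nat \<Rightarrow> nat \<Rightarrow> 'a" where
  "Pmatrix b = (\<lambda>i j. snd (b j) i)"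

end

theory Submission
  imports Defs "Jordan_Normal_Form.Determinant"
begin

definition sg :: "nat set \<Rightarrow> nat \<Rightarrow> 'a::comm_ring_1" where
  "sg T i = (-1) ^ card {j\<in>T. j < i}"

lemma sg_sq[simp]: "sg T i * sg T i = (1::'a::comm_ring_1)"
  unfolding sg_def by (simp add: power_mult_distrib[symmetric])

lemma sg_sq2[simp]: "sg T i * (sg T i * x) = (x::'a::comm_ring_1)"
  by (simp add: mult.assoc[symmetric])

lemma sg_remove:
  assumes "finite T" "i \<noteq> k"
  shows "sg (T - {i}) k = (sg T k :: 'a::comm_ring_1) * (if i < k \<and> i \<in> T then -1 else 1)"
proof (cases "i < k \<and> i \<in> T")
  case True
  have "{j\<in>T. j < k} = insert i {j\<in>T - {i}. j < k}" using True by auto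
  hence "card {j\<in>T. j < k} = Suc (card {j\<in>T - {i}. j < k})" using assms by simp
  thus ?thesis using True unfolding sg_def by simp
next
  case False
  have "{j\<in>T. j < k} = {j\<in>T - {i}. j < k}" using False by auto
  hence "sg (T - {i}) k = (sg T k :: 'a)" unfolding sg_def by simp
  thus ?thesis by (simp only: if_not_P[OF False] mult_1_right)
qed

lemma sg_remove_same: "sg (T - {i}) i = sg T i"
proof -
  have "{j\<in>T - {i}. j < i} = {j\<in>T. j < i}" by auto
  thus ?thesis unfolding sg_def by simp
qed

lemma sg_insert:
  assumes "finite T" "i \<noteq> k" "i \<notin> T"
  shows "sg (insert i T) k = (sg T k :: 'a::comm_ring_1) * (if i < k then -1 else 1)"
proof -
  have "sg T k = (sg (insert i T) k :: 'a) * (if i < k \<and> i \<in> insert i T then -1 else 1)"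
    using sg_remove[of "insert i T" i k] assms by simp
  thus ?thesis by (auto split: if_splits)
qed

lemma sg_insert_same: "sg (insert i T) i = sg T i"
proof -
  have "{j\<in>insert i T. j < i} = {j\<in>T. j < i}" by auto
  thus ?thesis unfolding sg_def by simp
qed

lemma wedge1_eq: "wedge1 n f w T = (if T \<subseteq> {..<n} then (\<Sum>i\<in>T. sg T i * f i * w (T - {i})) else 0)"
  unfolding wedge1_def sg_def by simp

lemma contr_eq: "contr n f w T = (if T \<subseteq> {..<n} then (\<Sum>i\<in>{..<n} - T. sg T i * f i * w (insert i T)) else 0)"
  unfolding contr_def sg_def by simp

lemma sum_remove_if: "finite T \<Longrightarrow> (\<Sum>k\<in>T - {i}. h k) = (\<Sum>k\<in>T. if k = i then 0 else h k)"
  by (simp add: sum.If_cases Diff_eq Int_commute)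

lemma wedge_wedge:
  fixes f g :: "nat \<Rightarrow> 'a::comm_ring_1"
  shows "wedge1 n f (wedge1 n g w) T = - wedge1 n g (wedge1 n f w) T"
proof (cases "T \<subseteq> {..<n}")
  case False thus ?thesis by (simp add: wedge1_eq)
next
  case True
  have fin: "finite T" using True finite_subset by blast
  have sub: "\<And>i. T - {i} \<subseteq> {..<n}" using True by auto
  have L: "wedge1 n f (wedge1 n g w) T = (\<Sum>i\<in>T. \<Sum>k\<in>T. if k = i then 0 else
      sg T i * sg (T - {i}) k * f i * g k * w (T - {i} - {k}))"
    unfolding wedge1_eq[of n f] using True sub fin
    by (simp add: wedge1_eq sum_remove_if sum_distrib_left mult_ac if_distrib cong: if_cong)
  have R: "wedge1 n g (wedge1 n f w) T = (\<Sum>i\<in>T. \<Sum>k\<in>T. if k = i then 0 else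
      sg T i * sg (T - {i}) k * g i * f k * w (T - {i} - {k}))"
    unfolding wedge1_eq[of n g] using True sub fin
    by (simp add: wedge1_eq sum_remove_if sum_distrib_left mult_ac if_distrib cong: if_cong)
  have S1: "(\<Sum>i\<in>T. \<Sum>k\<in>T. if k = i then 0 else
      sg T i * sg (T - {i}) k * g i * f k * w (T - {i} - {k})) = (\<Sum>k\<in>T. \<Sum>i\<in>T. if k = i then 0 else
      sg T i * sg (T - {i}) k * g i * f k * w (T - {i} - {k}))"
    by (rule sum.swap)
  have S2: "(\<Sum>k\<in>T. \<Sum>i\<in>T. if k = i then 0 else
      sg T i * sg (T - {i}) k * g i * f k * w (T - {i} - {k})) = - (\<Sum>i\<in>T. \<Sum>k\<in>T. if k = i then 0 else
      sg T i * sg (T - {i}) k * f i * g k * w (T - {i} - {k}))"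
  proof -
    have "\<And>i k. i \<in> T \<Longrightarrow> k \<in> T \<Longrightarrow> i \<noteq> k \<Longrightarrow>
      (sg T k * sg (T - {k}) i * g k * f i * w (T - {k} - {i}) :: 'a)
      = - (sg T i * sg (T - {i}) k * f i * g k * w (T - {i} - {k}))"
    proof -
      fix i k assume ik: "i \<in> T" "k \<in> T" "i \<noteq> k"
      have e: "T - {k} - {i} = T - {i} - {k}" by auto
      show "(sg T k * sg (T - {k}) i * g k * f i * w (T - {k} - {i}) :: 'a)
      = - (sg T i * sg (T - {i}) k * f i * g k * w (T - {i} - {k}))" unfolding e using ik fin
        by (auto simp: sg_remove[of T k i] sg_remove[of T i k] algebra_simps)
    qed
    thus ?thesis by (auto simp: sum_negf[symmetric] intro!: sum.cong)
  qed
  show ?thesis using L R S1 S2 by simp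
qed

lemma contr_contr:
  fixes f g :: "nat \<Rightarrow> 'a::comm_ring_1"
  shows "contr n f (contr n g w) T = - contr n g (contr n f w) T"
proof (cases "T \<subseteq> {..<n}")
  case False thus ?thesis by (simp add: contr_eq)
next
  case True
  have fin: "finite T" using True finite_subset by blast
  let ?D = "{..<n} - T"
  have sub: "\<And>i. i \<in> ?D \<Longrightarrow> insert i T \<subseteq> {..<n}" using True by auto
  have dd: "\<And>i. {..<n} - insert i T = ?D - {i}" by auto
  have L: "\<And>f g. contr n f (contr n g w) T = (\<Sum>i\<in>?D. \<Sum>k\<in>?D. if k = i then 0 else
      sg T i * sg (insert i T) k * f i * g k * w (insert k (insert i T)))"
  proof -
    fix f g :: "nat \<Rightarrow> 'a"
    show "contr n f (contr n g w) T = (\<Sum>i\<in>?D. \<Sum>k\<in>?D. if k = i then 0 else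
      sg T i * sg (insert i T) k * f i * g k * w (insert k (insert i T)))"
      unfolding contr_eq[of n f] using True
      by (auto simp: contr_eq sub dd sum_remove_if sum_distrib_left mult_ac if_distrib cong: if_cong intro!: sum.cong)
  qed
  have S1: "(\<Sum>i\<in>?D. \<Sum>k\<in>?D. if k = i then 0 else
      sg T i * sg (insert i T) k * g i * f k * w (insert k (insert i T))) = (\<Sum>k\<in>?D. \<Sum>i\<in>?D. if k = i then 0 else
      sg T i * sg (insert i T) k * g i * f k * w (insert k (insert i T)))"
    by (rule sum.swap)
  have S2: "(\<Sum>k\<in>?D. \<Sum>i\<in>?D. if k = i then 0 else
      sg T i * sg (insert i T) k * g i * f k * w (insert k (insert i T))) = - (\<Sum>i\<in>?D. \<Sum>k\<in>?D. if k = i then 0 else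
      sg T i * sg (insert i T) k * f i * g k * w (insert k (insert i T)))"
  proof -
    have "\<And>i k. i \<in> ?D \<Longrightarrow> k \<in> ?D \<Longrightarrow> i \<noteq> k \<Longrightarrow>
      (sg T k * sg (insert k T) i * g k * f i * w (insert i (insert k T)) :: 'a)
      = - (sg T i * sg (insert i T) k * f i * g k * w (insert k (insert i T)))"
    proof -
      fix i k assume ik: "i \<in> ?D" "k \<in> ?D" "i \<noteq> k"
      have e: "insert i (insert k T) = insert k (insert i T)" by auto
      show "(sg T k * sg (insert k T) i * g k * f i * w (insert i (insert k T)) :: 'a)
      = - (sg T i * sg (insert i T) k * f i * g k * w (insert k (insert i T)))" unfolding e using ik fin
        by (auto simp: sg_insert[of T k i] sg_insert[of T i k] algebra_simps)
    qed
    thus ?thesis by (auto simp: sum_negf[symmetric] intro!: sum.cong)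
  qed
  show ?thesis using L[of f g] L[of g f] S1 S2 by simp
qed

definition dp :: "nat \<Rightarrow> (nat \<Rightarrow> 'a::comm_ring_1) \<Rightarrow> (nat \<Rightarrow> 'a) \<Rightarrow> 'a" where
  "dp n p f = (\<Sum>i<n. p i * f i)"

lemma aux_cancel: "(a + b) + (c + - b) = a + (c::'a::ab_group_add)" by simp

lemma contr_wedge:
  fixes f p :: "nat \<Rightarrow> 'a::comm_ring_1"
  assumes w: "w \<in> ext_alg n"
  shows "contr n p (wedge1 n f w) T + wedge1 n f (contr n p w) T = dp n p f * w T"
proof (cases "T \<subseteq> {..<n}")
  case False thus ?thesis using w by (simp add: contr_eq wedge1_eq ext_alg_def)
next
  case True
  have fin: "finite T" using True finite_subset by blast
  let ?D = "{..<n} - T"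
  have sub: "\<And>i. i \<in> ?D \<Longrightarrow> insert i T \<subseteq> {..<n}" using True by auto
  have sub2: "\<And>k. T - {k} \<subseteq> {..<n}" using True by auto
  have L1: "contr n p (wedge1 n f w) T = (\<Sum>i\<in>?D. p i * f i * w T) + (\<Sum>i\<in>?D. \<Sum>k\<in>T.
      sg T i * sg (insert i T) k * p i * f k * w (insert i T - {k}))"
  proof -
    have "contr n p (wedge1 n f w) T = (\<Sum>i\<in>?D. sg T i * p i * (\<Sum>k\<in>insert i T. sg (insert i T) k * f k * w (insert i T - {k})))"
      unfolding contr_eq[of n p] using True sub by (auto simp: wedge1_eq intro!: sum.cong)
    also have "\<dots> = (\<Sum>i\<in>?D. p i * f i * w T + (\<Sum>k\<in>T.
      sg T i * sg (insert i T) k * p i * f k * w (insert i T - {k})))"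
    proof (rule sum.cong)
      fix i assume i: "i \<in> ?D"
      hence iT: "i \<notin> T" by auto
      have e: "insert i T - {i} = T" using iT by auto
      show "sg T i * p i * (\<Sum>k\<in>insert i T. sg (insert i T) k * f k * w (insert i T - {k})) =
         p i * f i * w T + (\<Sum>k\<in>T. sg T i * sg (insert i T) k * p i * f k * w (insert i T - {k}))"
        using iT fin by (simp add: e sg_insert_same distrib_left sum_distrib_left mult_ac)
    qed simp
    finally show ?thesis by (simp add: sum.distrib)
  qed
  have L2: "wedge1 n f (contr n p w) T = (\<Sum>k\<in>T. f k * p k * w T) + (\<Sum>k\<in>T. \<Sum>i\<in>?D.
      sg T k * sg (T - {k}) i * f k * p i * w (insert i (T - {k})))"
  proof -
    have "wedge1 n f (contr n p w) T = (\<Sum>k\<in>T. sg T k * f k * (\<Sum>i\<in>{..<n} - (T - {k}). sg (T - {k}) i * p i * w (insert i (T - {k}))))"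
      unfolding wedge1_eq[of n f] using True sub2 by (auto simp: contr_eq intro!: sum.cong)
    also have "\<dots> = (\<Sum>k\<in>T. f k * p k * w T + (\<Sum>i\<in>?D.
      sg T k * sg (T - {k}) i * f k * p i * w (insert i (T - {k}))))"
    proof (rule sum.cong)
      fix k assume k: "k \<in> T"
      have e: "insert k (T - {k}) = T" using k by auto
      have d: "{..<n} - (T - {k}) = insert k ?D" using k True by auto
      have kD: "k \<notin> ?D" using k by auto
      show "sg T k * f k * (\<Sum>i\<in>{..<n} - (T - {k}). sg (T - {k}) i * p i * w (insert i (T - {k}))) =
         f k * p k * w T + (\<Sum>i\<in>?D. sg T k * sg (T - {k}) i * f k * p i * w (insert i (T - {k})))"
        unfolding d using kD k by (simp add: e insert_absorb sg_remove_same distrib_left sum_distrib_left mult_ac)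
    qed simp
    finally show ?thesis by (simp add: sum.distrib)
  qed
  have C: "(\<Sum>k\<in>T. \<Sum>i\<in>?D. sg T k * sg (T - {k}) i * f k * p i * w (insert i (T - {k})))
    = - (\<Sum>i\<in>?D. \<Sum>k\<in>T. sg T i * sg (insert i T) k * p i * f k * w (insert i T - {k}))"
  proof -
    have "(\<Sum>k\<in>T. \<Sum>i\<in>?D. sg T k * sg (T - {k}) i * f k * p i * w (insert i (T - {k})))
      = (\<Sum>i\<in>?D. \<Sum>k\<in>T. sg T k * sg (T - {k}) i * f k * p i * w (insert i (T - {k})))"
      by (rule sum.swap)
    also have "\<dots> = (\<Sum>i\<in>?D. \<Sum>k\<in>T. - (sg T i * sg (insert i T) k * p i * f k * w (insert i T - {k})))"
    proof (intro sum.cong refl)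
      fix i k assume i: "i \<in> ?D" and k: "k \<in> T"
      have ik: "i \<noteq> k" "i \<notin> T" using i k by auto
      have e: "insert i T - {k} = insert i (T - {k})" using ik by auto
      show "sg T k * sg (T - {k}) i * f k * p i * w (insert i (T - {k})) =
          - (sg T i * sg (insert i T) k * p i * f k * w (insert i T - {k}))"
        unfolding e using ik k fin
        by (auto simp: sg_insert[of T i k] sg_remove[of T k i] algebra_simps)
    qed
    finally show ?thesis by (simp add: sum_negf)
  qed
  have "(\<Sum>i\<in>?D. p i * f i * w T) + (\<Sum>k\<in>T. f k * p k * w T) = (\<Sum>i\<in>?D \<union> T. p i * f i * w T)"
    by (subst sum.union_disjoint) (auto simp: fin mult_ac)
  also have "?D \<union> T = {..<n}" using True by auto
  finally have E: "(\<Sum>i\<in>?D. p i * f i * w T) + (\<Sum>k\<in>T. f k * p k * w T) = dp n p f * w T"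
    by (simp add: dp_def sum_distrib_right)
  show ?thesis unfolding L1 L2 C E[symmetric] by (rule aux_cancel)
qed

definition Bf :: "nat \<Rightarrow> (nat \<Rightarrow> 'a::comm_ring_1) \<times> (nat \<Rightarrow> 'a) \<Rightarrow> (nat \<Rightarrow> 'a) \<times> (nat \<Rightarrow> 'a) \<Rightarrow> 'a" where
  "Bf n x y = dp n (snd x) (fst y) + dp n (snd y) (fst x)"

lemma wedge1_add: "wedge1 n f (\<lambda>S. u S + v S) T = wedge1 n f u T + wedge1 n f v T"
  by (simp add: wedge1_eq distrib_left sum.distrib)
lemma contr_add: "contr n f (\<lambda>S. u S + v S) T = contr n f u T + contr n f v T"
  by (simp add: contr_eq distrib_left sum.distrib)
lemma wedge1_smult: "wedge1 n f (\<lambda>S. a * u S) T = a * wedge1 n f u T"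
  by (simp add: wedge1_eq sum_distrib_left mult_ac)
lemma contr_smult: "contr n f (\<lambda>S. a * u S) T = a * contr n f u T"
  by (simp add: contr_eq sum_distrib_left mult_ac)
lemma wedge1_zero[simp]: "wedge1 n f (\<lambda>S. 0) T = 0"
  by (simp add: wedge1_eq)
lemma contr_zero[simp]: "contr n f (\<lambda>S. 0) T = 0"
  by (simp add: contr_eq)
lemma wedge1_zero'[simp]: "wedge1 n (\<lambda>S. 0) w T = 0"
  by (simp add: wedge1_eq)
lemma contr_zero'[simp]: "contr n (\<lambda>S. 0) w T = 0"
  by (simp add: contr_eq)

lemma cliff_add: "cliff n x (\<lambda>S. u S + v S) = (\<lambda>T. cliff n x u T + cliff n x v T)"
  by (simp add: cliff_def wedge1_add contr_add fun_eq_iff algebra_simps)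
lemma cliff_smult: "cliff n x (\<lambda>S. a * u S) = (\<lambda>T. a * cliff n x u T)"
  by (simp add: cliff_def wedge1_smult contr_smult fun_eq_iff algebra_simps)
lemma cliff_zero[simp]: "cliff n x (\<lambda>S. 0) = (\<lambda>T. 0)"
  by (simp add: cliff_def fun_eq_iff)
lemma cliff_ext: "cliff n x w \<in> ext_alg n"
  by (simp add: cliff_def ext_alg_def wedge1_eq contr_eq)

lemma cliff_anti:
  assumes w: "w \<in> ext_alg n"
  shows "cliff n x (cliff n y w) T + cliff n y (cliff n x w) T = Bf n x y * w T"
proof -
  have a: "cliff n x (cliff n y w) T = wedge1 n (fst x) (wedge1 n (fst y) w) T + wedge1 n (fst x) (contr n (snd y) w) T
     + (contr n (snd x) (wedge1 n (fst y) w) T + contr n (snd x) (contr n (snd y) w) T)"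
    by (simp add: cliff_def wedge1_add contr_add)
  have b: "cliff n y (cliff n x w) T = wedge1 n (fst y) (wedge1 n (fst x) w) T + wedge1 n (fst y) (contr n (snd x) w) T
     + (contr n (snd y) (wedge1 n (fst x) w) T + contr n (snd y) (contr n (snd x) w) T)"
    by (simp add: cliff_def wedge1_add contr_add)
  have c1: "wedge1 n (fst y) (wedge1 n (fst x) w) T = - wedge1 n (fst x) (wedge1 n (fst y) w) T"
    by (rule wedge_wedge)
  have c2: "contr n (snd y) (contr n (snd x) w) T = - contr n (snd x) (contr n (snd y) w) T"
    by (rule contr_contr)
  have c3: "contr n (snd x) (wedge1 n (fst y) w) T + wedge1 n (fst y) (contr n (snd x) w) T = dp n (snd x) (fst y) * w T"
    by (rule contr_wedge[OF w])
  have c4: "contr n (snd y) (wedge1 n (fst x) w) T + wedge1 n (fst x) (contr n (snd y) w) T = dp n (snd y) (fst x) * w T"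
    by (rule contr_wedge[OF w])
  show ?thesis unfolding a b c1 c2 Bf_def distrib_right c3[symmetric] c4[symmetric] by (simp add: add_ac)
qed

lemma half_cancel:
  assumes half: "(2::'a::comm_ring_1) dvd 1" and "2 * a = 2 * (b::'a)"
  shows "a = b"
proof -
  obtain h :: 'a where h: "1 = 2 * h" using half by (auto elim!: dvdE)
  have "h * (2 * a) = h * (2 * b)" using assms by simp
  thus ?thesis using h by (simp add: mult.assoc[symmetric] mult.commute[of h])
qed

lemma Bf_self: "Bf n x x = 2 * Qform n x"
  by (simp add: Bf_def dp_def Qform_def)

lemma cliff_sq:
  assumes half: "(2::'a::comm_ring_1) dvd 1" and w: "w \<in> ext_alg n"
  shows "cliff n x (cliff n x w) T = Qform n x * (w T :: 'a)"
proof -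
  have "2 * cliff n x (cliff n x w) T = cliff n x (cliff n x w) T + cliff n x (cliff n x w) T"
    by (rule mult_2)
  also have "\<dots> = Bf n x x * w T" by (rule cliff_anti[OF w])
  also have "\<dots> = 2 * (Qform n x * w T)" by (simp add: Bf_self mult.assoc)
  finally have "2 * cliff n x (cliff n x w) T = 2 * (Qform n x * w T)" .
  thus ?thesis by (rule half_cancel[OF half])
qed

lemma Qform_padd: "Qform n (padd x y) = Qform n x + Qform n y + Bf n x y"
  by (simp add: Qform_def padd_def Bf_def dp_def algebra_simps sum.distrib)

fun ops :: "nat \<Rightarrow> (nat \<Rightarrow> (nat \<Rightarrow> 'a::comm_ring_1) \<times> (nat \<Rightarrow> 'a)) \<Rightarrow> nat \<Rightarrow> (nat set \<Rightarrow> 'a) \<Rightarrow> nat set \<Rightarrow> 'a" where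
  "ops n K 0 w = w"
| "ops n K (Suc m) w = ops n K m (cliff n (K m) w)"

lemma ops_add: "ops n K m (\<lambda>S. u S + v S) = (\<lambda>T. ops n K m u T + ops n K m v T)"
  by (induction m arbitrary: u v) (simp_all add: cliff_add)
lemma ops_smult: "ops n K m (\<lambda>S. a * u S) = (\<lambda>T. a * ops n K m u T)"
  by (induction m arbitrary: u) (simp_all add: cliff_smult)
lemma ops_zero: "ops n K m (\<lambda>S. 0) = (\<lambda>T. 0)"
  using ops_smult[of n K m 0 "\<lambda>S. 0"] by simp
lemma ops_neg: "ops n K m (\<lambda>S. - u S) = (\<lambda>T. - ops n K m u T)"
  using ops_smult[of n K m "-1" u] by simp
lemma ops_ext: "w \<in> ext_alg n \<Longrightarrow> ops n K m w \<in> ext_alg n"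
  by (induction m arbitrary: w) (simp_all add: cliff_ext)

lemma ops_anti:
  assumes "w \<in> ext_alg n" "\<forall>j<m. Bf n x (K j) = 0"
  shows "cliff n x (ops n K m w) = (\<lambda>S. (-1) ^ m * ops n K m (cliff n x w) S)"
  using assms
proof (induction m arbitrary: w)
  case 0 thus ?case by simp
next
  case (Suc m)
  have e: "cliff n x (cliff n (K m) w) = (\<lambda>S. - cliff n (K m) (cliff n x w) S)"
    using cliff_anti[OF Suc.prems(1), of x "K m"] Suc.prems(2) by (auto simp: fun_eq_iff eq_neg_iff_add_eq_0)
  have "cliff n x (ops n K (Suc m) w) = cliff n x (ops n K m (cliff n (K m) w))" by simp
  also have "\<dots> = (\<lambda>S. (-1) ^ m * ops n K m (cliff n x (cliff n (K m) w)) S)"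
  proof -
    have "\<forall>j<m. Bf n x (K j) = 0" using Suc.prems(2) by simp
    thus ?thesis using Suc.IH[OF cliff_ext] by blast
  qed
  also have "\<dots> = (\<lambda>S. (-1) ^ Suc m * ops n K (Suc m) (cliff n x w) S)"
    unfolding e ops_neg by simp
  finally show ?case .
qed

lemma ops_kill:
  assumes half: "(2::'a::comm_ring_1) dvd 1"
    and "w \<in> ext_alg n" "\<forall>i<m. \<forall>j<m. Bf n (K i) (K j) = (0::'a)" "k < m"
  shows "cliff n (K k) (ops n K m w) = (\<lambda>S. 0)"
  using assms(2-)
proof (induction m arbitrary: w)
  case 0 thus ?case by simp
next
  case (Suc m)
  show ?case
  proof (cases "k < m")
    case True
    have "\<forall>i<m. \<forall>j<m. Bf n (K i) (K j) = 0" using Suc.prems(2) by simp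
    thus ?thesis using Suc.IH[OF cliff_ext] True by simp
  next
    case False
    hence k: "k = m" using Suc.prems by simp
    have Q: "Qform n (K m) = 0"
      using Suc.prems(2) half_cancel[OF half, of "Qform n (K m)" 0] Bf_self[of n "K m"] by simp
    have sq: "cliff n (K m) (cliff n (K m) w) = (\<lambda>S. 0)"
      using cliff_sq[OF half Suc.prems(1)] Q by (simp add: fun_eq_iff)
    have "cliff n (K m) (ops n K m (cliff n (K m) w)) = (\<lambda>S. (-1) ^ m * ops n K m (cliff n (K m) (cliff n (K m) w)) S)"
      by (rule ops_anti[OF cliff_ext]) (use Suc.prems in auto)
    thus ?thesis unfolding k sq ops_zero by simp
  qed
qed

lemma wedge1_lin: "wedge1 n (\<lambda>i. \<Sum>k<m. c k * F k i) v T = (\<Sum>k<m. c k * wedge1 n (F k) v T)"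
proof -
  have "(\<Sum>i\<in>T. sg T i * (\<Sum>k<m. c k * F k i) * v (T - {i})) = (\<Sum>i\<in>T. \<Sum>k<m. c k * (sg T i * F k i * v (T - {i})))"
    by (simp add: sum_distrib_left sum_distrib_right mult_ac)
  also have "\<dots> = (\<Sum>k<m. \<Sum>i\<in>T. c k * (sg T i * F k i * v (T - {i})))" by (rule sum.swap)
  finally show ?thesis by (simp add: wedge1_eq sum_distrib_left)
qed
lemma contr_lin: "contr n (\<lambda>i. \<Sum>k<m. c k * F k i) v T = (\<Sum>k<m. c k * contr n (F k) v T)"
proof -
  have "(\<Sum>i\<in>{..<n} - T. sg T i * (\<Sum>k<m. c k * F k i) * v (insert i T)) = (\<Sum>i\<in>{..<n} - T. \<Sum>k<m. c k * (sg T i * F k i * v (insert i T)))"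
    by (simp add: sum_distrib_left sum_distrib_right mult_ac)
  also have "\<dots> = (\<Sum>k<m. \<Sum>i\<in>{..<n} - T. c k * (sg T i * F k i * v (insert i T)))" by (rule sum.swap)
  finally show ?thesis by (simp add: contr_eq sum_distrib_left)
qed

lemma cliff_plc: "cliff n (plc c K m) v T = (\<Sum>k<m. c k * cliff n (K k) v T)"
  by (simp add: cliff_def plc_def vlc_def wedge1_lin contr_lin distrib_left sum.distrib)

lemma ops_ann:
  assumes half: "(2::'a::comm_ring_1) dvd 1"
    and "w \<in> ext_alg n" "\<forall>i<m. \<forall>j<m. Bf n (K i) (K j) = (0::'a)"
  shows "cliff n (plc c K m) (ops n K m w) = (\<lambda>S. 0)"
  using ops_kill[OF half assms(2,3)] by (simp add: fun_eq_iff cliff_plc)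

definition hom :: "nat \<Rightarrow> (nat set \<Rightarrow> 'a::zero) \<Rightarrow> bool" where
  "hom d v \<longleftrightarrow> (\<forall>S. card S \<noteq> d \<longrightarrow> v S = 0)"
definition hi :: "nat \<Rightarrow> (nat set \<Rightarrow> 'a::zero) \<Rightarrow> bool" where
  "hi k v \<longleftrightarrow> (\<forall>S. card S < k \<longrightarrow> v S = 0)"

lemma hom_hi: "hom d v \<Longrightarrow> hi d v"
  unfolding hom_def hi_def by auto
lemma hi_mono: "hi k v \<Longrightarrow> k' \<le> k \<Longrightarrow> hi k' v"
  unfolding hi_def by auto

lemma wedge_hom: "hom d w \<Longrightarrow> hom (Suc d) (wedge1 n f w)"
  unfolding hom_def
proof (intro allI impI)
  fix T :: "nat set" assume h: "\<forall>S. card S \<noteq> d \<longrightarrow> w S = 0" and c: "card T \<noteq> Suc d"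
  show "wedge1 n f w T = 0"
  proof (cases "T \<subseteq> {..<n}")
    case True
    hence fin: "finite T" using finite_subset by blast
    have "\<And>i. i \<in> T \<Longrightarrow> w (T - {i}) = 0"
    proof -
      fix i assume "i \<in> T"
      hence "card (T - {i}) = card T - 1" "card T \<ge> 1" using fin by (auto simp: card_gt_0_iff Suc_le_eq)
      thus "w (T - {i}) = 0" using h c by auto
    qed
    thus ?thesis by (simp add: wedge1_eq)
  qed (simp add: wedge1_eq)
qed

lemma contr_hom: "hom (Suc d) w \<Longrightarrow> hom d (contr n p w)"
  unfolding hom_def
proof (intro allI impI)
  fix T :: "nat set" assume h: "\<forall>S. card S \<noteq> Suc d \<longrightarrow> w S = 0" and c: "card T \<noteq> d"
  show "contr n p w T = 0"
  proof (cases "T \<subseteq> {..<n}")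
    case True
    hence fin: "finite T" using finite_subset by blast
    have "\<And>i. i \<in> {..<n} - T \<Longrightarrow> w (insert i T) = 0"
      using h c fin by auto
    thus ?thesis by (simp add: contr_eq)
  qed (simp add: contr_eq)
qed

lemma wedge_hi: "hi k w \<Longrightarrow> hi (Suc k) (wedge1 n f w)"
  unfolding hi_def
proof (intro allI impI)
  fix T :: "nat set" assume h: "\<forall>S. card S < k \<longrightarrow> w S = 0" and c: "card T < Suc k"
  show "wedge1 n f w T = 0"
  proof (cases "T \<subseteq> {..<n}")
    case True
    hence fin: "finite T" using finite_subset by blast
    have "\<And>i. i \<in> T \<Longrightarrow> w (T - {i}) = 0"
    proof -
      fix i assume "i \<in> T"
      hence "card (T - {i}) = card T - 1" "card T \<ge> 1" using fin by (auto simp: card_gt_0_iff Suc_le_eq)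
      thus "w (T - {i}) = 0" using h c by auto
    qed
    thus ?thesis by (simp add: wedge1_eq)
  qed (simp add: wedge1_eq)
qed

lemma contr_hi: "hi (Suc k) w \<Longrightarrow> hi k (contr n p w)"
  unfolding hi_def
proof (intro allI impI)
  fix T :: "nat set" assume h: "\<forall>S. card S < Suc k \<longrightarrow> w S = 0" and c: "card T < k"
  show "contr n p w T = 0"
  proof (cases "T \<subseteq> {..<n}")
    case True
    hence fin: "finite T" using finite_subset by blast
    have "\<And>i. i \<in> {..<n} - T \<Longrightarrow> w (insert i T) = 0"
      using h c fin by auto
    thus ?thesis by (simp add: contr_eq)
  qed (simp add: contr_eq)
qed

lemma cliff_hi: "hi (Suc k) w \<Longrightarrow> hi k (cliff n x w)"
proof -
  assume h: "hi (Suc k) w"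
  have "hi k (wedge1 n (fst x) w)" by (rule hi_mono[OF wedge_hi[OF h]]) simp
  moreover have "hi k (contr n (snd x) w)" using contr_hi[OF h] .
  ultimately show ?thesis unfolding hi_def cliff_def by simp
qed

lemma ops_hi: "hi (m + k) w \<Longrightarrow> hi k (ops n K m w)"
  by (induction m arbitrary: w) (simp_all add: cliff_hi)

fun contrs :: "nat \<Rightarrow> (nat \<Rightarrow> (nat \<Rightarrow> 'a::comm_ring_1) \<times> (nat \<Rightarrow> 'a)) \<Rightarrow> nat \<Rightarrow> (nat set \<Rightarrow> 'a) \<Rightarrow> nat set \<Rightarrow> 'a" where
  "contrs n K 0 w = w"
| "contrs n K (Suc m) w = contrs n K m (contr n (snd (K m)) w)"

lemma ops_low: "hom (m + d) w \<Longrightarrow> card S \<le> d \<Longrightarrow> ops n K m w S = contrs n K m w S"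
proof (induction m arbitrary: w)
  case 0 thus ?case by simp
next
  case (Suc m)
  have c: "cliff n (K m) w = (\<lambda>T. wedge1 n (fst (K m)) w T + contr n (snd (K m)) w T)"
    by (simp add: cliff_def)
  have h1: "hi (m + Suc d) (wedge1 n (fst (K m)) w)"
    by (rule hi_mono[OF wedge_hi[OF hom_hi[OF Suc.prems(1)]]]) simp
  have z: "ops n K m (wedge1 n (fst (K m)) w) S = 0"
    using ops_hi[OF h1] Suc.prems(2) unfolding hi_def by auto
  have h2: "hom (m + d) (contr n (snd (K m)) w)"
    using contr_hom[of "m + d" w] Suc.prems(1) by simp
  show ?case using Suc.IH[OF h2 Suc.prems(2)] z by (simp add: c ops_add)
qed

fun wedges :: "nat \<Rightarrow> (nat \<Rightarrow> nat \<Rightarrow> 'a::comm_ring_1) \<Rightarrow> (nat set \<Rightarrow> 'a) \<Rightarrow> nat \<Rightarrow> nat set \<Rightarrow> 'a" where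
  "wedges n f b 0 = b"
| "wedges n f b (Suc m) = wedge1 n (f m) (wedges n f b m)"

definition delta0 :: "nat set \<Rightarrow> 'a::comm_ring_1" where
  "delta0 S = (if S = {} then 1 else 0)"

lemma delta0_ext: "delta0 \<in> ext_alg n"
  by (simp add: ext_alg_def delta0_def)
lemma delta0_hom: "hom 0 delta0"
  by (simp add: hom_def delta0_def)
lemma delta0_contr: "contr n p delta0 = (\<lambda>T. 0)"
  by (simp add: fun_eq_iff contr_eq delta0_def)

lemma wedges_ext: "b \<in> ext_alg n \<Longrightarrow> wedges n f b m \<in> ext_alg n"
  by (induction m) (auto simp: ext_alg_def wedge1_eq)
lemma wedges_hom: "hom 0 b \<Longrightarrow> hom m (wedges n f b m)"
  by (induction m) (auto intro: wedge_hom)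

lemma contr_wedge_fun:
  assumes "w \<in> ext_alg n"
  shows "contr n p (wedge1 n f w) = (\<lambda>T. dp n p f * w T - wedge1 n f (contr n p w) T)"
  using contr_wedge[OF assms] by (simp add: fun_eq_iff algebra_simps)

lemma contr_wedges_zero:
  assumes b: "b \<in> ext_alg n" "contr n p b = (\<lambda>T. 0)" and d: "\<forall>j<m. dp n p (f j) = 0"
  shows "contr n p (wedges n f b m) = (\<lambda>T. 0)"
  using d
proof (induction m)
  case 0 thus ?case using b by simp
next
  case (Suc m)
  have z: "contr n p (wedges n f b m) = (\<lambda>T. 0)" using Suc by simp
  have "contr n p (wedges n f b (Suc m)) = (\<lambda>T. dp n p (f m) * wedges n f b m T - wedge1 n (f m) (contr n p (wedges n f b m)) T)"
    using contr_wedge_fun[OF wedges_ext[OF b(1)], of p "f m" f m] by simp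
  also have "\<dots> = (\<lambda>T. 0)" unfolding z using Suc.prems by simp
  finally show ?case .
qed

lemma contrs_wedges:
  assumes b: "b \<in> ext_alg n" "\<forall>j<m. contr n (snd (K j)) b = (\<lambda>T. 0)"
    and d: "\<forall>j<m. \<forall>i\<le>j. dp n (snd (K j)) (f i) = (if i = j then 1 else 0)"
  shows "contrs n K m (wedges n f b m) = b"
  using b(2) d
proof (induction m)
  case 0 thus ?case by simp
next
  case (Suc m)
  have z: "contr n (snd (K m)) (wedges n f b m) = (\<lambda>T. 0)"
    by (rule contr_wedges_zero[OF b(1)]) (use Suc.prems in auto)
  have "contr n (snd (K m)) (wedges n f b (Suc m)) = wedges n f b m"
    using contr_wedge_fun[OF wedges_ext[OF b(1)], of "snd (K m)" "f m" f m] z Suc.prems(2)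
    by (simp add: fun_eq_iff)
  thus ?case using Suc by simp
qed

lemma ops_wedges_empty:
  assumes d: "\<forall>j<m. \<forall>i\<le>j. dp n (snd (K j)) (f i) = (if i = j then 1 else 0)"
  shows "ops n K m (wedges n f delta0 m) {} = 1"
proof -
  have "ops n K m (wedges n f delta0 m) {} = contrs n K m (wedges n f delta0 m) {}"
    by (rule ops_low[where d = 0]) (use wedges_hom[OF delta0_hom] in auto)
  also have "contrs n K m (wedges n f delta0 m) = delta0"
    by (rule contrs_wedges[OF delta0_ext _ d]) (simp add: delta0_contr)
  also have "delta0 {} = (1::'a)" by (simp add: delta0_def)
  finally show ?thesis .
qed

lemma wedge1_single: assumes "k < n" shows "wedge1 n u y {k} = u k * y {}"
proof -
  have e: "{j. j = k \<and> j < k} = {}" by auto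
  show ?thesis using assms unfolding wedge1_eq sg_def by (simp add: e)
qed

definition mk :: "nat \<Rightarrow> (nat \<Rightarrow> nat \<Rightarrow> 'a) \<Rightarrow> 'a mat" where
  "mk n C = mat n n (\<lambda>(i,j). C i j)"

lemma mk_carrier[simp]: "mk n C \<in> carrier_mat n n"
  by (simp add: mk_def)

lemma mk_index[simp]: "i < n \<Longrightarrow> j < n \<Longrightarrow> mk n C $$ (i,j) = C i j"
  by (simp add: mk_def)

lemma mk_mult: "mk n C * mk n D = mk n (\<lambda>i j. \<Sum>k<n. C i k * (D k j :: 'a::comm_ring_1))"
  by (rule eq_matI) (auto simp: mk_def scalar_prod_def atLeast0LessThan intro!: sum.cong)

lemma mk_one: "mk n (\<lambda>i j. if i = j then 1 else 0) = (1\<^sub>m n :: 'a::comm_ring_1 mat)"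
  by (rule eq_matI) (auto simp: mk_def)

lemma mk_eq: "mk n C = mk n D \<Longrightarrow> i < n \<Longrightarrow> j < n \<Longrightarrow> C i j = D i j"
  by (metis mk_index)

lemma smult_smult_mat': "a \<cdot>\<^sub>m (b \<cdot>\<^sub>m A) = (a * b :: 'a::comm_ring_1) \<cdot>\<^sub>m A"
  by (rule eq_matI) (auto simp: mult.assoc)

lemma one_smult_mat': "(1::'a::comm_ring_1) \<cdot>\<^sub>m A = A"
  by (rule eq_matI) auto

lemma mat_inv_comm:
  fixes A B :: "'a::comm_ring_1 mat"
  assumes A: "A \<in> carrier_mat n n" and B: "B \<in> carrier_mat n n" and AB: "A * B = 1\<^sub>m n"
  shows "B * A = 1\<^sub>m n" "det A * det B = 1"
proof -
  show dd: "det A * det B = 1" using det_mult[OF A B] AB by simp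
  let ?d = "det A"
  have adjA: "adj_mat A \<in> carrier_mat n n" using adj_mat(1)[OF A] .
  have "adj_mat A = adj_mat A * (A * B)" using AB adjA by simp
  also have "\<dots> = (adj_mat A * A) * B" using adjA A B by simp
  also have "\<dots> = ?d \<cdot>\<^sub>m B" using adj_mat(3)[OF A] B by (simp add: mult_smult_assoc_mat[OF one_carrier_mat B])
  finally have adj: "adj_mat A = ?d \<cdot>\<^sub>m B" .
  have "?d \<cdot>\<^sub>m (B * A) = (?d \<cdot>\<^sub>m B) * A" using A B by (simp add: mult_smult_assoc_mat)
  also have "\<dots> = ?d \<cdot>\<^sub>m 1\<^sub>m n" using adj adj_mat(3)[OF A] by simp
  finally have e: "?d \<cdot>\<^sub>m (B * A) = ?d \<cdot>\<^sub>m 1\<^sub>m n" .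
  have "B * A = (det B * ?d) \<cdot>\<^sub>m (B * A)" using dd by (simp add: mult.commute one_smult_mat')
  also have "\<dots> = det B \<cdot>\<^sub>m (?d \<cdot>\<^sub>m (B * A))" by (simp add: smult_smult_mat')
  also have "\<dots> = (det B * ?d) \<cdot>\<^sub>m 1\<^sub>m n" unfolding e by (simp add: smult_smult_mat')
  also have "\<dots> = 1\<^sub>m n" using dd by (simp add: mult.commute one_smult_mat')
  finally show "B * A = 1\<^sub>m n" .
qed

lemma fun_inv_comm:
  fixes C D :: "nat \<Rightarrow> nat \<Rightarrow> 'a::comm_ring_1"
  assumes "\<forall>i<n. \<forall>j<n. (\<Sum>k<n. C i k * D k j) = (if i = j then 1 else 0)"
  shows "\<forall>i<n. \<forall>j<n. (\<Sum>k<n. D i k * C k j) = (if i = j then 1 else 0)"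
proof -
  have "mk n (\<lambda>i j. \<Sum>k<n. C i k * D k j) = mk n (\<lambda>i j. if i = j then 1 else 0)"
    unfolding mk_def using assms by (intro eq_matI) auto
  hence "mk n C * mk n D = mk n (\<lambda>i j. if i = j then 1 else 0)" by (simp only: mk_mult)
  hence "mk n D * mk n C = mk n (\<lambda>i j. if i = j then 1 else 0)"
    using mat_inv_comm(1)[of "mk n C" n "mk n D"] by (simp add: mk_one)
  thus ?thesis unfolding mk_mult using mk_eq by blast
qed

lemma pair_eqI: "(\<And>i. fst x i = fst y i) \<Longrightarrow> (\<And>i. snd x i = snd y i) \<Longrightarrow> x = (y :: (nat \<Rightarrow> 'a) \<times> (nat \<Rightarrow> 'a))"
  by (simp add: prod_eq_iff fun_eq_iff)

lemma fst_plc[simp]: "fst (plc c K m) i = (\<Sum>k<m. c k * fst (K k) i)"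
  by (simp add: plc_def vlc_def)
lemma snd_plc[simp]: "snd (plc c K m) i = (\<Sum>k<m. c k * snd (K k) i)"
  by (simp add: plc_def vlc_def)
lemma fst_padd[simp]: "fst (padd x y) i = fst x i + fst y i" by (simp add: padd_def)
lemma snd_padd[simp]: "snd (padd x y) i = snd x i + snd y i" by (simp add: padd_def)
lemma fst_psmul[simp]: "fst (psmul r x) i = r * fst x i" by (simp add: psmul_def)
lemma snd_psmul[simp]: "snd (psmul r x) i = r * snd x i" by (simp add: psmul_def)
lemma fst_pzero[simp]: "fst pzero i = 0" by (simp add: pzero_def)
lemma snd_pzero[simp]: "snd pzero i = 0" by (simp add: pzero_def)

lemma aux_sub: "v = a + b \<Longrightarrow> v = a' + b' \<Longrightarrow> a + -1 * a' = b' + -1 * (b::'a::comm_ring_1)"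
proof -
  assume "v = a + b" "v = a' + b'"
  hence "a + b = a' + b'" by simp
  hence "a - a' = b' - b" by (simp add: algebra_simps)
  thus ?thesis by simp
qed

lemma plc_0: "plc c K 0 = pzero"
  by (rule pair_eqI) simp_all
lemma plc_Suc: "plc c K (Suc m) = padd (plc c K m) (psmul (c m) (K m))"
  by (rule pair_eqI) simp_all

lemma submod_plc:
  assumes "is_submod n M" "\<forall>k<m. K k \<in> M"
  shows "plc c K m \<in> M"
  using assms(2)
proof (induction m)
  case 0 thus ?case using assms(1) by (simp add: plc_0 is_submod_def)
next
  case (Suc m)
  thus ?case using assms(1) unfolding plc_Suc is_submod_def by simp
qed

lemma plc_cong: "(\<And>k. k < m \<Longrightarrow> c k = d k) \<Longrightarrow> plc c K m = plc d K m"
  by (rule pair_eqI) simp_all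

lemma if10_mult: "(if P then 1 else 0) * x = (if P then x else (0::'a::comm_ring_1))" by simp

lemma plc_unit: "k < m \<Longrightarrow> plc (\<lambda>l. if l = k then 1 else 0) K m = K k"
  by (rule pair_eqI) (simp_all add: if10_mult)

lemma plc_plc: "plc c (\<lambda>k. plc (d k) G m) n = plc (\<lambda>l. \<Sum>k<n. c k * d k l) G m"
proof (rule pair_eqI)
  fix i
  have "(\<Sum>k<n. c k * (\<Sum>l<m. d k l * fst (G l) i)) = (\<Sum>k<n. \<Sum>l<m. c k * d k l * fst (G l) i)"
    by (simp add: sum_distrib_left mult.assoc)
  also have "\<dots> = (\<Sum>l<m. \<Sum>k<n. c k * d k l * fst (G l) i)" by (rule sum.swap)
  finally show "fst (plc c (\<lambda>k. plc (d k) G m) n) i = fst (plc (\<lambda>l. \<Sum>k<n. c k * d k l) G m) i"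
    by (simp add: sum_distrib_right)
next
  fix i
  have "(\<Sum>k<n. c k * (\<Sum>l<m. d k l * snd (G l) i)) = (\<Sum>k<n. \<Sum>l<m. c k * d k l * snd (G l) i)"
    by (simp add: sum_distrib_left mult.assoc)
  also have "\<dots> = (\<Sum>l<m. \<Sum>k<n. c k * d k l * snd (G l) i)" by (rule sum.swap)
  finally show "snd (plc c (\<lambda>k. plc (d k) G m) n) i = snd (plc (\<lambda>l. \<Sum>k<n. c k * d k l) G m) i"
    by (simp add: sum_distrib_right)
qed

lemma span_trans:
  assumes "\<forall>x\<in>M. \<exists>c. x = plc c b n" "\<forall>k<n. \<exists>d. b k = plc d G m"
  shows "\<forall>x\<in>M. \<exists>c. x = plc c G m"
proof
  fix x assume "x \<in> M"
  then obtain c where c: "x = plc c b n" using assms(1) by blast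
  have "\<forall>k. \<exists>d. k < n \<longrightarrow> b k = plc d G m" using assms(2) by blast
  from choice[OF this] obtain d where d: "\<forall>k. k < n \<longrightarrow> b k = plc (d k) G m" by blast
  have "plc c b n = plc c (\<lambda>k. plc (d k) G m) n"
    by (rule pair_eqI) (simp_all add: d)
  thus "\<exists>c. x = plc c G m" unfolding c plc_plc by blast
qed

lemma pbasis_span: "is_pbasis M n b \<Longrightarrow> \<forall>x\<in>M. \<exists>c. x = plc c b n"
  unfolding is_pbasis_def by metis

definition lf :: "nat \<Rightarrow> (nat \<Rightarrow> 'a::comm_ring_1) \<Rightarrow> (nat \<Rightarrow> 'a) \<Rightarrow> (nat \<Rightarrow> 'a) \<times> (nat \<Rightarrow> 'a) \<Rightarrow> 'a" where
  "lf n l1 l2 v = (\<Sum>i<n. l1 i * fst v i + l2 i * snd v i)"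

lemma lf_plc: "lf n l1 l2 (plc c K m) = (\<Sum>k<m. c k * lf n l1 l2 (K k))"
proof -
  have "lf n l1 l2 (plc c K m) = (\<Sum>i<n. \<Sum>k<m. c k * (l1 i * fst (K k) i + l2 i * snd (K k) i))"
    by (simp add: lf_def sum_distrib_left sum.distrib algebra_simps)
  also have "\<dots> = (\<Sum>k<m. \<Sum>i<n. c k * (l1 i * fst (K k) i + l2 i * snd (K k) i))" by (rule sum.swap)
  finally show ?thesis by (simp add: lf_def sum_distrib_left)
qed

lemma coord_functional:
  fixes M :: "((nat \<Rightarrow> 'a::comm_ring_1) \<times> (nat \<Rightarrow> 'a)) set"
  assumes summand: "is_direct_summand n M" and basis: "is_pbasis M n b"
  shows "\<exists>L1 L2. \<forall>j<n. \<forall>k<n. lf n (L1 j) (L2 j) (b k) = (if j = k then 1 else 0)"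
proof -
  obtain N where N: "is_submod n N" "M \<inter> N = {pzero}" "\<forall>x\<in>HHcar n. \<exists>m\<in>M. \<exists>k\<in>N. x = padd m k"
    using summand unfolding is_direct_summand_def by blast
  have Msub: "is_submod n M" using summand unfolding is_direct_summand_def by blast
  have bM: "\<forall>k<n. b k \<in> M" using basis unfolding is_pbasis_def by blast
  define dec where "dec v c \<longleftrightarrow> (\<forall>k\<ge>n. c k = (0::'a)) \<and> (\<exists>k\<in>N. v = padd (plc c b n) k)" for v c
  have ex: "\<exists>c. dec v c" if v: "v \<in> HHcar n" for v
  proof -
    obtain m k where mk: "m \<in> M" "k \<in> N" "v = padd m k" using N(3) v by blast
    obtain c where "(\<forall>k\<ge>n. c k = 0) \<and> m = plc c b n" using basis mk(1) unfolding is_pbasis_def by blast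
    thus ?thesis unfolding dec_def using mk by blast
  qed
  have uniq: "c = c'" if d1: "dec v c" and d2: "dec v c'" for v c c'
  proof -
    obtain k where k: "k \<in> N" "v = padd (plc c b n) k" and c0: "\<forall>k\<ge>n. c k = 0" using d1 unfolding dec_def by blast
    obtain k' where k': "k' \<in> N" "v = padd (plc c' b n) k'" and c0': "\<forall>k\<ge>n. c' k = 0" using d2 unfolding dec_def by blast
    let ?m = "plc c b n" and ?m' = "plc c' b n"
    have mM: "?m \<in> M" "?m' \<in> M" using submod_plc[OF Msub bM] by auto
    let ?d = "padd ?m (psmul (-1) ?m')"
    have dM: "?d \<in> M" using mM Msub unfolding is_submod_def by blast
    have "?d = padd k' (psmul (-1) k)"
    proof (rule pair_eqI)
      fix i
      have "fst v i = fst ?m i + fst k i" by (simp add: k(2))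
      moreover have "fst v i = fst ?m' i + fst k' i" by (simp add: k'(2))
      ultimately show "fst ?d i = fst (padd k' (psmul (-1) k)) i" by (simp only: fst_padd fst_psmul aux_sub)
    next
      fix i
      have "snd v i = snd ?m i + snd k i" by (simp add: k(2))
      moreover have "snd v i = snd ?m' i + snd k' i" by (simp add: k'(2))
      ultimately show "snd ?d i = snd (padd k' (psmul (-1) k)) i" by (simp only: snd_padd snd_psmul aux_sub)
    qed
    moreover have "padd k' (psmul (-1) k) \<in> N" using N(1) k(1) k'(1) unfolding is_submod_def by blast
    ultimately have "?d \<in> M \<inter> N" using dM by simp
    hence "?d = pzero" using N(2) by blast
    hence "?m = ?m'"
    proof -
      assume z: "?d = pzero"
      show ?thesis
      proof (rule pair_eqI)
        fix i show "fst ?m i = fst ?m' i" using arg_cong[OF z, of "\<lambda>p. fst p i"] by (simp del: fst_plc)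
      next
        fix i show "snd ?m i = snd ?m' i" using arg_cong[OF z, of "\<lambda>p. snd p i"] by (simp del: snd_plc)
      qed
    qed
    moreover have "\<exists>!c. (\<forall>k\<ge>n. c k = 0) \<and> ?m = plc c b n" using basis mM unfolding is_pbasis_def by blast
    ultimately show "c = c'" using c0 c0' by metis
  qed
  have dec_add: "dec (padd v w) (\<lambda>j. c j + c' j)" if d1: "dec v c" and d2: "dec w c'" for v w c c'
  proof -
    obtain k where k: "k \<in> N" "v = padd (plc c b n) k" and c0: "\<forall>k\<ge>n. c k = 0" using d1 unfolding dec_def by blast
    obtain k' where k': "k' \<in> N" "w = padd (plc c' b n) k'" and c0': "\<forall>k\<ge>n. c' k = 0" using d2 unfolding dec_def by blast
    have "padd v w = padd (plc (\<lambda>j. c j + c' j) b n) (padd k k')"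
      unfolding k(2) k'(2) by (rule pair_eqI) (simp_all add: algebra_simps sum.distrib)
    moreover have "padd k k' \<in> N" using N(1) k k' unfolding is_submod_def by blast
    ultimately show ?thesis unfolding dec_def using c0 c0' by auto
  qed
  have dec_smult: "dec (psmul r v) (\<lambda>j. r * c j)" if d1: "dec v c" for v c r
  proof -
    obtain k where k: "k \<in> N" "v = padd (plc c b n) k" and c0: "\<forall>k\<ge>n. c k = 0" using d1 unfolding dec_def by blast
    have "psmul r v = padd (plc (\<lambda>j. r * c j) b n) (psmul r k)"
      unfolding k(2) by (rule pair_eqI) (simp_all add: algebra_simps sum_distrib_left)
    moreover have "psmul r k \<in> N" using N(1) k unfolding is_submod_def by blast
    ultimately show ?thesis unfolding dec_def using c0 by auto
  qed
  have dec_zero: "dec pzero (\<lambda>j. 0)"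
  proof -
    have "pzero = padd (plc (\<lambda>j. 0::'a) b n) pzero" by (rule pair_eqI) simp_all
    thus ?thesis unfolding dec_def using N(1) unfolding is_submod_def by auto
  qed
  have dec_b: "dec (b k) (\<lambda>j. if j = k then 1 else 0)" if kn: "k < n" for k
  proof -
    have "b k = padd (plc (\<lambda>j. if j = k then 1 else 0::'a) b n) pzero"
      using plc_unit[OF kn, of b] by (metis (no_types) pair_eqI fst_padd snd_padd fst_pzero snd_pzero add_0_right)
    thus ?thesis unfolding dec_def using N(1) kn unfolding is_submod_def by auto
  qed
  define E1 :: "nat \<Rightarrow> (nat \<Rightarrow> 'a) \<times> (nat \<Rightarrow> 'a)" where "E1 i = ((\<lambda>j. if j = i then 1 else 0), (\<lambda>j. 0))" for i
  define E2 :: "nat \<Rightarrow> (nat \<Rightarrow> 'a) \<times> (nat \<Rightarrow> 'a)" where "E2 i = ((\<lambda>j. 0), (\<lambda>j. if j = i then 1 else 0))" for i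
  have E1H: "E1 i \<in> HHcar n" "E2 i \<in> HHcar n" if "i < n" for i
    using that by (auto simp: E1_def E2_def HHcar_def Hcar_def)
  define c1 where "c1 i = (SOME c. dec (E1 i) c)" for i
  define c2 where "c2 i = (SOME c. dec (E2 i) c)" for i
  have c1: "dec (E1 i) (c1 i)" "dec (E2 i) (c2 i)" if "i < n" for i
    unfolding c1_def c2_def using someI_ex[OF ex[OF E1H(1)[OF that]]] someI_ex[OF ex[OF E1H(2)[OF that]]] by auto
  define vpart :: "nat \<Rightarrow> (nat \<Rightarrow> 'a) \<times> (nat \<Rightarrow> 'a) \<Rightarrow> (nat \<Rightarrow> 'a) \<times> (nat \<Rightarrow> 'a)"
    where "vpart m v = ((\<lambda>j. if j < m then fst v j else 0), (\<lambda>j. if j < m then snd v j else 0))" for m v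
  have vp: "dec (vpart m v) (\<lambda>j. \<Sum>i<m. fst v i * c1 i j + snd v i * c2 i j)" if "m \<le> n" for m v
    using that
  proof (induction m)
    case 0
    have "vpart 0 v = pzero" unfolding vpart_def pzero_def by simp
    thus ?case using dec_zero by simp
  next
    case (Suc m)
    have "vpart (Suc m) v = padd (vpart m v) (padd (psmul (fst v m) (E1 m)) (psmul (snd v m) (E2 m)))"
      by (rule pair_eqI) (auto simp: vpart_def E1_def E2_def less_Suc_eq)
    moreover have "dec (padd (vpart m v) (padd (psmul (fst v m) (E1 m)) (psmul (snd v m) (E2 m))))
        (\<lambda>j. (\<Sum>i<m. fst v i * c1 i j + snd v i * c2 i j) + (fst v m * c1 m j + snd v m * c2 m j))"
      using Suc by (intro dec_add dec_smult c1) auto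
    ultimately show ?case by (simp add: add_ac)
  qed
  have vpn: "vpart n v = v" if "v \<in> HHcar n" for v
    using that by (intro pair_eqI) (auto simp: vpart_def HHcar_def Hcar_def)
  have "\<forall>j<n. \<forall>k<n. lf n (\<lambda>i. c1 i j) (\<lambda>i. c2 i j) (b k) = (if j = k then 1 else 0)"
  proof (intro allI impI)
    fix j k assume jk: "j < n" "k < n"
    have bH: "b k \<in> HHcar n" using bM jk Msub unfolding is_submod_def by blast
    have "(\<lambda>j. \<Sum>i<n. fst (b k) i * c1 i j + snd (b k) i * c2 i j) = (\<lambda>j. if j = k then 1 else 0)"
      using uniq[OF vp[of n "b k", unfolded vpn[OF bH]] dec_b[OF jk(2)]] by simp
    from fun_cong[OF this, of j] show "lf n (\<lambda>i. c1 i j) (\<lambda>i. c2 i j) (b k) = (if j = k then 1 else 0)"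
      unfolding lf_def by (simp add: mult.commute)
  qed
  thus ?thesis by (intro exI[where x="\<lambda>j i. c1 i j"] exI[where x="\<lambda>j i. c2 i j"]) simp
qed

lemma local_01: "local_ring TYPE('a::comm_ring_1) \<Longrightarrow> (0::'a) \<noteq> 1"
  unfolding local_ring_def by blast

lemma local_add: "local_ring TYPE('a::comm_ring_1) \<Longrightarrow> (a + b :: 'a) dvd 1 \<Longrightarrow> a dvd 1 \<or> b dvd 1"
  unfolding local_ring_def by blast

lemma local_sum_unit:
  assumes loc: "local_ring TYPE('a::comm_ring_1)" and fin: "finite F"
    and u: "(\<Sum>x\<in>F. f x :: 'a) dvd 1"
  shows "\<exists>x\<in>F. f x dvd 1"
  using fin u
proof (induction F rule: finite_induct)
  case empty thus ?case using local_01[OF loc] by simp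
next
  case (insert x F)
  hence "f x dvd 1 \<or> (\<Sum>x\<in>F. f x) dvd 1" using local_add[OF loc] by simp
  thus ?case using insert by blast
qed

lemma zero_not_unit: "local_ring TYPE('a::comm_ring_1) \<Longrightarrow> \<not> (0::'a) dvd 1"
  using local_01 by auto

lemma basis_change:
  fixes M :: "((nat \<Rightarrow> 'a::comm_ring_1) \<times> (nat \<Rightarrow> 'a)) set"
  assumes summand: "is_direct_summand n M" and basis: "is_pbasis M n b"
    and C: "\<forall>k<n. b k = plc (C k) G n"
  shows "\<exists>D. (\<forall>l<n. G l = plc (D l) b n) \<and> (\<forall>k<n. \<forall>j<n. (\<Sum>l<n. C k l * D l j) = (if k = j then 1 else 0))
          \<and> (\<forall>l<n. \<forall>j<n. (\<Sum>k<n. D l k * C k j) = (if l = j then 1 else 0))"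
proof -
  obtain L1 L2 where L: "\<forall>j<n. \<forall>k<n. lf n (L1 j) (L2 j) (b k) = (if j = k then 1 else 0)"
    using coord_functional[OF summand basis] by blast
  define D where "D l j = lf n (L1 j) (L2 j) (G l)" for l j
  have CD: "\<forall>k<n. \<forall>j<n. (\<Sum>l<n. C k l * D l j) = (if k = j then 1 else 0)"
  proof (intro allI impI)
    fix k j assume kj: "k < n" "j < n"
    have "lf n (L1 j) (L2 j) (b k) = (\<Sum>l<n. C k l * D l j)"
      unfolding D_def using C kj by (simp add: lf_plc)
    thus "(\<Sum>l<n. C k l * D l j) = (if k = j then 1 else 0)" using L kj by auto
  qed
  have DC: "\<forall>l<n. \<forall>j<n. (\<Sum>k<n. D l k * C k j) = (if l = j then 1 else 0)"
    using fun_inv_comm[OF CD] .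
  have "\<forall>l<n. G l = plc (D l) b n"
  proof (intro allI impI)
    fix l assume l: "l < n"
    have "plc (D l) b n = plc (D l) (\<lambda>k. plc (C k) G n) n"
      by (rule pair_eqI) (simp_all add: C)
    also have "\<dots> = plc (\<lambda>j. \<Sum>k<n. D l k * C k j) G n" by (rule plc_plc)
    also have "\<dots> = plc (\<lambda>j. if j = l then 1 else 0) G n"
      by (rule plc_cong) (use DC l in auto)
    also have "\<dots> = G l" by (rule plc_unit[OF l])
    finally show "G l = plc (D l) b n" by simp
  qed
  thus ?thesis using CD DC by blast
qed

lemma span_members_in_M:
  fixes M :: "((nat \<Rightarrow> 'a::comm_ring_1) \<times> (nat \<Rightarrow> 'a)) set"
  assumes summand: "is_direct_summand n M" and basis: "is_pbasis M n b"
    and span: "\<forall>x\<in>M. \<exists>c. x = plc c G n"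
  shows "\<forall>l<n. G l \<in> M"
proof -
  have bM: "\<forall>k<n. b k \<in> M" using basis unfolding is_pbasis_def by blast
  have Msub: "is_submod n M" using summand unfolding is_direct_summand_def by blast
  have "\<forall>k. \<exists>c. k < n \<longrightarrow> b k = plc c G n" using span bM by blast
  from choice[OF this] obtain C where C: "\<forall>k<n. b k = plc (C k) G n" by blast
  obtain D where "\<forall>l<n. G l = plc (D l) b n" using basis_change[OF summand basis C] by blast
  thus ?thesis using submod_plc[OF Msub bM] by simp
qed

lemma Bf_zero_M:
  assumes iso: "totally_isotropic n M" and Msub: "is_submod n M" and xy: "x \<in> M" "y \<in> M"
  shows "Bf n x y = 0"
proof -
  have "padd x y \<in> M" using Msub xy unfolding is_submod_def by blast
  thus ?thesis using iso xy Qform_padd[of n x y] unfolding totally_isotropic_def by simp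
qed

lemma ops_shift: "ops n K (Suc m) w = cliff n (K 0) (ops n (\<lambda>j. K (Suc j)) m w)"
  by (induction m arbitrary: w) simp_all

lemma spinor_of:
  fixes M :: "((nat \<Rightarrow> 'a::comm_ring_1) \<times> (nat \<Rightarrow> 'a)) set"
  assumes half: "(2::'a) dvd 1" and iso: "totally_isotropic n M" and Msub: "is_submod n M"
    and ann: "{w \<in> ext_alg n. \<forall>x\<in>M. cliff n x w = (\<lambda>_. 0)} = {(\<lambda>S. r * s S) | r. True}"
    and KM: "\<forall>k<m. K k \<in> M" and span: "\<forall>x\<in>M. \<exists>c. x = plc c K m"
    and w: "w \<in> ext_alg n"
  shows "\<exists>r. ops n K m w = (\<lambda>S. r * s S)"
proof -
  have B0: "\<forall>i<m. \<forall>j<m. Bf n (K i) (K j) = 0" using Bf_zero_M[OF iso Msub] KM by blast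
  have "\<forall>x\<in>M. cliff n x (ops n K m w) = (\<lambda>_. 0)"
  proof
    fix x assume "x \<in> M"
    then obtain c where "x = plc c K m" using span by blast
    thus "cliff n x (ops n K m w) = (\<lambda>_. 0)" using ops_ann[OF half w B0] by simp
  qed
  hence "ops n K m w \<in> {w \<in> ext_alg n. \<forall>x\<in>M. cliff n x w = (\<lambda>_. 0)}" using ops_ext[OF w] by simp
  thus ?thesis unfolding ann by blast
qed

lemma cond2_iff:
  "({(\<Sum>i<n. f' i * s {i}) | f'. f' \<in> Hcar n} = (UNIV :: 'a::comm_ring_1 set))
    \<longleftrightarrow> (\<exists>f'\<in>Hcar n. (\<Sum>i<n. f' i * s {i}) = 1)"
proof
  assume "{(\<Sum>i<n. f' i * s {i}) | f'. f' \<in> Hcar n} = UNIV"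
  hence "(1::'a) \<in> {(\<Sum>i<n. f' i * s {i}) | f'. f' \<in> Hcar n}" by simp
  thus "\<exists>f'\<in>Hcar n. (\<Sum>i<n. f' i * s {i}) = 1" by auto
next
  assume "\<exists>f'\<in>Hcar n. (\<Sum>i<n. f' i * s {i}) = 1"
  then obtain f' where f': "f' \<in> Hcar n" "(\<Sum>i<n. f' i * s {i}) = 1" by blast
  have "a \<in> {(\<Sum>i<n. f' i * s {i}) | f'. f' \<in> Hcar n}" for a :: 'a
  proof -
    have "(\<lambda>i. a * f' i) \<in> Hcar n" using f'(1) by (simp add: Hcar_def)
    moreover have "(\<Sum>i<n. a * f' i * s {i}) = a" using f'(2) by (simp add: sum_distrib_left[symmetric] mult.assoc)
    ultimately show ?thesis by force
  qed
  thus "{(\<Sum>i<n. f' i * s {i}) | f'. f' \<in> Hcar n} = UNIV" by blast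
qed

lemma cond2_of_unit:
  assumes "i < n" "r * s {i} dvd (1::'a::comm_ring_1)"
  shows "\<exists>f'\<in>Hcar n. (\<Sum>i<n. f' i * s {i}) = 1"
proof -
  from assms(2) obtain v where v: "1 = r * s {i} * v" by (rule dvdE)
  define f' where "f' = (\<lambda>k. if k = i then v * r else (0::'a))"
  have "f' \<in> Hcar n" using assms(1) by (simp add: f'_def Hcar_def)
  moreover have "(\<Sum>k<n. f' k * s {k}) = 1"
  proof -
    have "(\<Sum>k<n. f' k * s {k}) = (\<Sum>k<n. if k = i then v * r * s {i} else 0)"
      by (rule sum.cong) (auto simp: f'_def)
    also have "\<dots> = v * r * s {i}" using assms(1) by simp
    also have "\<dots> = 1" using v by (simp add: mult_ac)
    finally show ?thesis .
  qed
  ultimately show ?thesis by blast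
qed

lemma s_empty_zero: "s \<in> ext_odd n \<Longrightarrow> s {} = 0"
  unfolding ext_odd_def by simp

lemma s_single_out: "s \<in> ext_alg n \<Longrightarrow> k \<ge> n \<Longrightarrow> s {k} = 0"
  unfolding ext_alg_def by auto

lemma n_pos:
  fixes M :: "((nat \<Rightarrow> 'a::comm_ring_1) \<times> (nat \<Rightarrow> 'a)) set"
  assumes loc: "local_ring TYPE('a)" and s_odd: "s \<in> ext_odd n"
    and ann: "{w \<in> ext_alg n. \<forall>x\<in>M. cliff n x w = (\<lambda>_. 0)} = {(\<lambda>S. r * s S) | r. True}"
  shows "n > 0"
proof (rule ccontr)
  assume "\<not> n > 0" hence n0: "n = 0" by simp
  have "\<And>x. cliff 0 x (delta0 :: nat set \<Rightarrow> 'a) = (\<lambda>_. 0)"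
    by (simp add: fun_eq_iff cliff_def wedge1_eq contr_eq delta0_def)
  hence "delta0 \<in> {w \<in> ext_alg n. \<forall>x\<in>M. cliff n x w = (\<lambda>_. 0)}" using n0 delta0_ext by simp
  then obtain r where "delta0 = (\<lambda>S. r * s S)" unfolding ann by blast
  hence "delta0 {} = r * s {}" by metis
  thus False using s_empty_zero[OF s_odd] local_01[OF loc] by (simp add: delta0_def)
qed

definition Gfam :: "nat \<Rightarrow> (nat \<Rightarrow> nat \<Rightarrow> 'a::comm_ring_1) \<Rightarrow> (nat \<Rightarrow> nat \<Rightarrow> 'a) \<Rightarrow> (nat \<Rightarrow> nat \<Rightarrow> 'a)
    \<Rightarrow> nat \<Rightarrow> (nat \<Rightarrow> 'a) \<times> (nat \<Rightarrow> 'a)" where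
  "Gfam n e e' X = (\<lambda>i. if i = 0 then (e 0, \<lambda>_. 0)
                              else (\<lambda>k. \<Sum>j\<in>{1..<n}. X j i * e j k, e' i))"

lemma one_to_two:
  fixes M :: "((nat \<Rightarrow> 'a::comm_ring_1) \<times> (nat \<Rightarrow> 'a)) set"
  assumes half: "(2::'a) dvd 1"
    and summand: "is_direct_summand n M"
    and iso: "totally_isotropic n M"
    and ann: "{w \<in> ext_alg n. \<forall>x\<in>M. cliff n x w = (\<lambda>_. 0)} = {(\<lambda>S. r * s S) | r. True}"
    and dual: "is_dual_basis n e e'"
    and Meq: "M = {plc c (Gfam n e e' X) n | c. True}"
    and npos: "n > 0"
  shows "\<exists>f'\<in>Hcar n. (\<Sum>i<n. f' i * s {i}) = 1"
proof -
  let ?G = "Gfam n e e' X"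
  have Msub: "is_submod n M" using summand unfolding is_direct_summand_def by blast
  have GM: "\<forall>k<n. ?G k \<in> M"
  proof (intro allI impI)
    fix k assume "k < n"
    hence "?G k = plc (\<lambda>l. if l = k then 1 else 0) ?G n" by (simp add: plc_unit)
    thus "?G k \<in> M" unfolding Meq by blast
  qed
  have span: "\<forall>x\<in>M. \<exists>c. x = plc c ?G n" unfolding Meq by blast
  define w where "w = wedges n (\<lambda>i. e (Suc i)) delta0 (n - 1)"
  have wext: "w \<in> ext_alg n" unfolding w_def by (rule wedges_ext[OF delta0_ext])
  obtain r where r: "ops n ?G n w = (\<lambda>S. r * s S)"
    using spinor_of[OF half iso Msub ann GM span wext] by blast
  have n1: "n = Suc (n - 1)" using npos by simp
  let ?y = "ops n (\<lambda>j. ?G (Suc j)) (n - 1) w"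
  have sh: "ops n ?G n w = cliff n (?G 0) ?y"
    using ops_shift[of n ?G "n - 1" w] n1 by simp
  have y0: "?y {} = 1" unfolding w_def
  proof (rule ops_wedges_empty, intro allI impI)
    fix j i assume j: "j < n - 1" and i: "i \<le> j"
    have "snd (?G (Suc j)) = e' (Suc j)" by (simp add: Gfam_def)
    thus "dp n (snd (?G (Suc j))) (e (Suc i)) = (if i = j then 1 else 0)"
      using dual j i unfolding is_dual_basis_def dp_def by auto
  qed
  have rs: "r * s {k} = e 0 k" if k: "k < n" for k
  proof -
    have "r * s {k} = cliff n (?G 0) ?y {k}" using r sh by metis
    also have "\<dots> = e 0 k" using k y0 by (simp add: cliff_def Gfam_def wedge1_single)
    finally show ?thesis .
  qed
  have e'0: "e' 0 \<in> Hcar n" using dual npos unfolding is_dual_basis_def by blast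
  have "(\<lambda>i. r * e' 0 i) \<in> Hcar n" using e'0 by (simp add: Hcar_def)
  moreover have "(\<Sum>i<n. r * e' 0 i * s {i}) = 1"
  proof -
    have "(\<Sum>i<n. r * e' 0 i * s {i}) = (\<Sum>i<n. e' 0 i * e 0 i)"
      by (rule sum.cong) (auto simp: rs[symmetric] mult_ac)
    also have "\<dots> = 1" using dual npos unfolding is_dual_basis_def by auto
    finally show ?thesis .
  qed
  ultimately show ?thesis by (intro bexI[of _ "\<lambda>i. r * e' 0 i"]) simp_all
qed

definition tau :: "nat \<Rightarrow> nat \<Rightarrow> nat" where
  "tau i0 j = (if j = 0 then i0 else if j = i0 then 0 else j)"
definition eps :: "nat \<Rightarrow> nat \<Rightarrow> 'a::comm_ring_1" where
  "eps i = (\<lambda>k. if k = i then 1 else 0)"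
definition eB :: "(nat set \<Rightarrow> 'a::comm_ring_1) \<Rightarrow> nat \<Rightarrow> nat \<Rightarrow> nat \<Rightarrow> 'a" where
  "eB s i0 j = (if j = 0 then (\<lambda>k. s {k}) else eps (tau i0 j))"
definition eD :: "(nat set \<Rightarrow> 'a::comm_ring_1) \<Rightarrow> nat \<Rightarrow> 'a \<Rightarrow> nat \<Rightarrow> nat \<Rightarrow> 'a" where
  "eD s i0 ui j = (if j = 0 then (\<lambda>k. ui * eps i0 k)
     else (\<lambda>k. eps (tau i0 j) k - ui * s {tau i0 j} * eps i0 k))"

lemma tau_tau: "tau i0 (tau i0 j) = j"
  by (simp add: tau_def)
lemma tau_lt: "i0 < n \<Longrightarrow> j < n \<Longrightarrow> tau i0 j < n"
  by (simp add: tau_def)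
lemma tau_i0: "tau i0 j = i0 \<longleftrightarrow> j = 0"
  unfolding tau_def by (cases "j = 0"; cases "j = i0") auto
lemma tau_i0': "i0 = tau i0 j \<longleftrightarrow> j = 0"
  using tau_i0[of i0 j] by auto

lemma tau_eq: "tau i0 k = p \<longleftrightarrow> k = tau i0 p"
proof
  assume "tau i0 k = p" thus "k = tau i0 p" using tau_tau[of i0 k] by simp
next
  assume "k = tau i0 p" thus "tau i0 k = p" using tau_tau[of i0 p] by simp
qed

lemma tau_inj: "tau i0 j = tau i0 k \<longleftrightarrow> j = k"
proof
  assume "tau i0 j = tau i0 k"
  hence "tau i0 (tau i0 j) = tau i0 (tau i0 k)" by simp
  thus "j = k" by (simp add: tau_tau)
qed simp

lemma mult_if10: "x * (if P then 1 else 0) = (if P then x else (0::'a::comm_ring_1))" by simp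

lemma dp_eps: "a < n \<Longrightarrow> dp n (eps a) v = v a"
  by (simp add: dp_def eps_def if10_mult)
lemma dp_eps': "a < n \<Longrightarrow> dp n v (eps a) = v a"
  by (simp add: dp_def eps_def mult_if10)

lemma dp_lin: "dp n (\<lambda>k. a * p k - b * q k) v = a * dp n p v - b * dp n q v"
  by (simp add: dp_def algebra_simps sum_subtractf sum_distrib_left)

lemma dp_eD:
  assumes i0: "i0 < n" and j: "j < n"
  shows "dp n (eD s i0 ui j) v = (if j = 0 then ui * v i0 else v (tau i0 j) - ui * s {tau i0 j} * v i0)"
proof (cases "j = 0")
  case True
  have "dp n (\<lambda>k. ui * eps i0 k) v = ui * dp n (eps i0) v" by (simp add: dp_def sum_distrib_left mult.assoc)
  thus ?thesis using i0 True by (simp add: eD_def dp_eps)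
next
  case False
  have "dp n (eD s i0 ui j) v = dp n (\<lambda>k. 1 * eps (tau i0 j) k - (ui * s {tau i0 j}) * eps i0 k) v"
    using False by (simp add: eD_def)
  also have "\<dots> = v (tau i0 j) - ui * s {tau i0 j} * v i0"
    unfolding dp_lin using i0 j by (simp add: dp_eps tau_lt)
  finally show ?thesis using False by simp
qed

lemma s1_out: "s \<in> ext_alg n \<Longrightarrow> k \<ge> n \<Longrightarrow> s {k} = 0"
  unfolding ext_alg_def by auto

lemma eB_Hcar: "i0 < n \<Longrightarrow> s \<in> ext_alg n \<Longrightarrow> j < n \<Longrightarrow> eB s i0 j \<in> Hcar n"
  using tau_lt[of i0 n j] by (auto simp: eB_def Hcar_def eps_def s1_out)
lemma eD_Hcar: "i0 < n \<Longrightarrow> s \<in> ext_alg n \<Longrightarrow> j < n \<Longrightarrow> eD s i0 ui j \<in> Hcar n"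
  using tau_lt[of i0 n j] by (auto simp: eD_def Hcar_def eps_def)

lemma eB_i0: "eB s i0 j i0 = (if j = 0 then s {i0} else 0)"
  by (auto simp: eB_def eps_def tau_i0')

lemma eB_tau: "i \<noteq> 0 \<Longrightarrow> eB s i0 j (tau i0 i) = (if j = 0 then s {tau i0 i} else if j = i then 1 else 0)"
  by (auto simp: eB_def eps_def tau_inj)

lemma eDB_dual:
  assumes i0: "i0 < n" and ui: "s {i0} * ui = 1" and i: "i < n" and j: "j < n"
  shows "dp n (eD s i0 ui i) (eB s i0 j) = (if i = j then 1 else 0)"
proof -
  have u: "s {i0} * (ui * x) = x" for x using ui by (simp add: mult.assoc[symmetric])
  show ?thesis using i0 i j ui by (auto simp: dp_eD eB_i0 eB_tau u mult.commute)
qed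

lemma expand_H:
  assumes i0: "i0 < n" and ui: "s {i0} * ui = 1" and sx: "s \<in> ext_alg n" and x: "x \<in> Hcar n"
  shows "x p = (\<Sum>k<n. dp n (eD s i0 ui k) x * eB s i0 k p)"
proof -
  have n0: "0 < n" using i0 by simp
  have split: "(\<Sum>k<n. g k) = g 0 + (\<Sum>k\<in>{1..<n}. g k)" for g :: "nat \<Rightarrow> 'a"
  proof -
    have "{..<n} = insert 0 {1..<n}" using n0 by auto
    thus ?thesis by simp
  qed
  have sel: "(\<Sum>k\<in>{1..<n}. if tau i0 k = p then g k else 0) = (if p < n \<and> p \<noteq> i0 then g (tau i0 p) else 0)" for g :: "nat \<Rightarrow> 'a"
  proof -
    have "(\<Sum>k\<in>{1..<n}. if tau i0 k = p then g k else 0) = (\<Sum>k\<in>{1..<n}. if k = tau i0 p then g k else 0)"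
      by (rule sum.cong) (simp_all only: tau_eq)
    also have "\<dots> = (if tau i0 p \<in> {1..<n} then g (tau i0 p) else 0)" by simp
    also have "(tau i0 p \<in> {1..<n}) = (p < n \<and> p \<noteq> i0)"
      using i0 by (auto simp: tau_def split: if_splits)
    finally show ?thesis .
  qed
  have "(\<Sum>k<n. dp n (eD s i0 ui k) x * eB s i0 k p)
      = ui * x i0 * s {p} + (\<Sum>k\<in>{1..<n}. if tau i0 k = p then x (tau i0 k) - ui * s {tau i0 k} * x i0 else 0)"
    unfolding split[of "\<lambda>k. dp n (eD s i0 ui k) x * eB s i0 k p"] using i0 n0
    by (auto simp: dp_eD eB_def eps_def intro!: sum.cong)
  also have "\<dots> = ui * x i0 * s {p} + (if p < n \<and> p \<noteq> i0 then x p - ui * s {p} * x i0 else 0)"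
    unfolding sel by (simp add: tau_tau)
  also have "\<dots> = x p"
  proof (cases "p < n")
    case False thus ?thesis using x sx s1_out[OF sx, of p] by (simp add: Hcar_def)
  next
    case True
    have hu: "ui * (y * s {i0}) = y" for y
    proof -
      have "ui * (y * s {i0}) = y * (s {i0} * ui)" by (simp add: mult_ac)
      thus ?thesis using ui by simp
    qed
    show ?thesis
    proof (cases "p = i0")
      case True thus ?thesis using hu[of "x i0"] by (simp add: mult_ac)
    next
      case False thus ?thesis using \<open>p < n\<close> by (simp add: algebra_simps)
    qed
  qed
  finally show ?thesis by simp
qed

lemma expand_Hd:
  assumes i0: "i0 < n" and ui: "s {i0} * ui = 1" and sx: "s \<in> ext_alg n" and f: "f \<in> Hcar n"
  shows "f p = (\<Sum>k<n. dp n f (eB s i0 k) * eD s i0 ui k p)"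
proof (cases "p < n")
  case False
  thus ?thesis using f eD_Hcar[OF i0 sx] by (simp add: Hcar_def)
next
  case True
  have ep: "eps p \<in> Hcar n" using True by (simp add: Hcar_def eps_def)
  have e: "\<And>q. eps p q = (\<Sum>k<n. dp n (eD s i0 ui k) (eps p) * eB s i0 k q)"
    using expand_H[OF i0 ui sx ep] .
  have "f p = (\<Sum>q<n. f q * eps p q)" using dp_eps'[OF True, of f] by (simp add: dp_def)
  also have "\<dots> = (\<Sum>q<n. f q * (\<Sum>k<n. dp n (eD s i0 ui k) (eps p) * eB s i0 k q))"
    by (simp only: e)
  also have "\<dots> = (\<Sum>q<n. \<Sum>k<n. dp n (eD s i0 ui k) (eps p) * (f q * eB s i0 k q))"
    by (simp add: sum_distrib_left mult_ac)
  also have "\<dots> = (\<Sum>k<n. \<Sum>q<n. dp n (eD s i0 ui k) (eps p) * (f q * eB s i0 k q))" by (rule sum.swap)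
  also have "\<dots> = (\<Sum>k<n. dp n (eD s i0 ui k) (eps p) * dp n f (eB s i0 k))"
    by (simp add: dp_def sum_distrib_left)
  also have "\<dots> = (\<Sum>k<n. dp n f (eB s i0 k) * eD s i0 ui k p)"
    using True by (simp add: dp_eps' mult.commute)
  finally show ?thesis .
qed

lemma sum_split0: "0 < (n::nat) \<Longrightarrow> (\<Sum>k<n. g k) = g 0 + (\<Sum>k\<in>{1..<n}. g k)"
proof -
  assume "0 < n"
  have "x \<in> {..<n} \<longleftrightarrow> x \<in> insert 0 {1..<n}" for x using \<open>0 < n\<close> by (cases x) auto
  hence "{..<n} = insert 0 {1..<n}" by blast
  thus ?thesis by simp
qed

lemma sum_diff_if: "finite A \<Longrightarrow> sum g (A - B) = (\<Sum>i\<in>A. if i \<in> B then 0 else g i)"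
  by (simp add: sum.If_cases Diff_eq Int_commute)

definition om :: "nat \<Rightarrow> nat \<Rightarrow> 'a::comm_ring_1" where
  "om a b = (if a < b then 1 else -1)"

lemma om_sq: "om a b * om a b = (1::'a::comm_ring_1)"
  by (simp add: om_def)

lemma wedge_pair:
  assumes ab: "a \<noteq> b" "a < n" "b < n"
  shows "wedge1 n f w {a,b} = om a b * (f a * w {b} - f b * (w {a} :: 'a::comm_ring_1))"
proof -
  have e1: "{a,b} - {a} = {b}" "{a,b} - {b} = {a}" using ab by auto
  have c1: "card {j\<in>{a,b}. j < a} = (if b < a then 1 else 0)"
  proof -
    have "{j\<in>{a,b}. j < a} = (if b < a then {b} else {})" by auto
    thus ?thesis by simp
  qed
  have c2: "card {j\<in>{a,b}. j < b} = (if a < b then 1 else 0)"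
  proof -
    have "{j\<in>{a,b}. j < b} = (if a < b then {a} else {})" by auto
    thus ?thesis by simp
  qed
  have s1: "sg {a,b} a = (if b < a then -1 else (1::'a))" unfolding sg_def c1 by simp
  have s2: "sg {a,b} b = (if a < b then -1 else (1::'a))" unfolding sg_def c2 by simp
  have "wedge1 n f w {a,b} = sg {a,b} a * f a * w {b} + sg {a,b} b * f b * w {a}"
    using ab by (simp add: wedge1_eq e1)
  thus ?thesis using ab unfolding s1 s2 om_def by (auto simp: algebra_simps)
qed

definition kap :: "(nat set \<Rightarrow> 'a::comm_ring_1) \<Rightarrow> nat \<Rightarrow> nat \<Rightarrow> nat \<Rightarrow> 'a" where
  "kap s a b i = (if i = a \<or> i = b then 0 else sg {a,b} i * s (insert i {a,b}))"

lemma contr_pair: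
  assumes "a < n" "b < n"
  shows "contr n p s {a,b} = (\<Sum>i<n. p i * kap s a b i)"
  unfolding contr_eq using assms by (simp add: sum_diff_if) (rule sum.cong, auto simp: kap_def mult_ac)

definition Lam :: "(nat set \<Rightarrow> 'a::comm_ring_1) \<Rightarrow> nat \<Rightarrow> (nat \<Rightarrow> 'a) \<Rightarrow> nat \<Rightarrow> nat \<Rightarrow> 'a" where
  "Lam s n q a i = (\<Sum>b<n. q b * (if b = a then 0 else - om a b * kap s a b i))"

lemma cliff_pt:
  "cliff n x w T = wedge1 n (fst x) w T + contr n (snd x) w T"
  by (simp add: cliff_def)

lemma deg0_ann:
  assumes "cliff n (f, p) s = (\<lambda>_. 0)"
  shows "dp n p (\<lambda>k. s {k}) = 0"
proof -
  have "cliff n (f, p) s {} = 0" using assms by simp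
  moreover have "sg {} i = (1::'a)" for i by (simp add: sg_def)
  ultimately show ?thesis by (simp add: cliff_pt wedge1_eq contr_eq dp_def)
qed

lemma deg2_ann:
  assumes "cliff n (f, p) s = (\<lambda>_. 0)" and ab: "a \<noteq> b" "a < n" "b < n"
  shows "f a * s {b} - f b * s {a} = - om a b * (\<Sum>i<n. p i * kap s a b i)"
proof -
  have "cliff n (f, p) s {a,b} = 0" using assms by simp
  hence "om a b * (f a * s {b} - f b * s {a}) = - (\<Sum>i<n. p i * kap s a b i)"
    using ab by (simp add: cliff_pt wedge_pair contr_pair eq_neg_iff_add_eq_0)
  hence "om a b * (om a b * (f a * s {b} - f b * s {a})) = - om a b * (\<Sum>i<n. p i * kap s a b i)"
    by simp
  thus ?thesis by (simp add: mult.assoc[symmetric] om_sq)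
qed

lemma coord_formula:
  assumes ann: "cliff n (f, p) s = (\<lambda>_. 0)" and a: "a < n" and q1: "dp n q (\<lambda>k. s {k}) = 1"
  shows "f a = dp n q f * s {a} + (\<Sum>i<n. p i * Lam s n q a i)"
proof -
  have pt: "f a * s {b} - f b * s {a} = (if b = a then 0 else - om a b * (\<Sum>i<n. p i * kap s a b i))" if b: "b < n" for b
    using deg2_ann[OF ann _ a b] by auto
  have "(\<Sum>b<n. q b * (f a * s {b} - f b * s {a})) = f a * dp n q (\<lambda>k. s {k}) - dp n q f * s {a}"
    by (simp add: dp_def algebra_simps sum_subtractf sum_distrib_left sum_distrib_right)
  also have "\<dots> = f a - dp n q f * s {a}" using q1 by simp
  finally have A: "f a - dp n q f * s {a} = (\<Sum>b<n. q b * (f a * s {b} - f b * s {a}))" by simp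
  also have "\<dots> = (\<Sum>b<n. q b * (if b = a then 0 else - om a b * (\<Sum>i<n. p i * kap s a b i)))"
    by (rule sum.cong) (simp_all add: pt)
  also have "\<dots> = (\<Sum>b<n. \<Sum>i<n. p i * (q b * (if b = a then 0 else - om a b * kap s a b i)))"
    by (rule sum.cong) (auto simp: sum_distrib_left mult_ac)
  also have "\<dots> = (\<Sum>i<n. \<Sum>b<n. p i * (q b * (if b = a then 0 else - om a b * kap s a b i)))"
    by (rule sum.swap)
  also have "\<dots> = (\<Sum>i<n. p i * Lam s n q a i)"
    by (simp add: Lam_def sum_distrib_left)
  finally show ?thesis by (simp add: algebra_simps)
qed

lemma dp_lincomb: "dp n q (\<lambda>k. \<Sum>l\<in>L. c l * v l k) = (\<Sum>l\<in>L. c l * dp n q (v l))"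
proof -
  have "dp n q (\<lambda>k. \<Sum>l\<in>L. c l * v l k) = (\<Sum>k<n. \<Sum>l\<in>L. c l * (q k * v l k))"
    by (simp add: dp_def sum_distrib_left mult_ac)
  also have "\<dots> = (\<Sum>l\<in>L. \<Sum>k<n. c l * (q k * v l k))" by (rule sum.swap)
  finally show ?thesis by (simp add: dp_def sum_distrib_left)
qed

lemma two_to_one:
  fixes M :: "((nat \<Rightarrow> 'a::comm_ring_1) \<times> (nat \<Rightarrow> 'a)) set"
  assumes loc: "local_ring TYPE('a)" and half: "(2::'a) dvd 1"
    and summand: "is_direct_summand n M" and iso: "totally_isotropic n M"
    and basis: "is_pbasis M n b" and sext: "s \<in> ext_alg n"
    and ann: "{w \<in> ext_alg n. \<forall>x\<in>M. cliff n x w = (\<lambda>_. 0)} = {(\<lambda>S. r * s S) | r. True}"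
    and f'H: "f' \<in> Hcar n" and f'1: "(\<Sum>i<n. f' i * s {i}) = 1"
  shows "\<exists>e e' X. is_Hbasis n e \<and> is_dual_basis n e e' \<and>
              (\<forall>i\<in>{1..<n}. \<forall>j\<in>{1..<n}. X j i = - X i j) \<and>
              M = {plc c (Gfam n e e' X) n | c. True}"
proof -
  have Msub: "is_submod n M" using summand unfolding is_direct_summand_def by blast
  obtain i0 where i0: "i0 < n" "f' i0 * s {i0} dvd 1"
    using local_sum_unit[OF loc, of "{..<n}" "\<lambda>i. f' i * s {i}"] f'1 by auto
  have "s {i0} dvd 1" using i0(2) by (rule dvd_mult_right)
  then obtain ui where ui: "s {i0} * ui = 1" by (metis dvdE)
  have npos: "0 < n" using i0 by simp
  define e where "e = eB s i0"
  define e' where "e' = eD s i0 ui"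
  have eH: "\<And>k. k < n \<Longrightarrow> e k \<in> Hcar n" unfolding e_def using eB_Hcar[OF i0(1) sext] .
  have e'H: "\<And>k. k < n \<Longrightarrow> e' k \<in> Hcar n" unfolding e'_def using eD_Hcar[OF i0(1) sext] .
  have dual: "\<And>i j. i < n \<Longrightarrow> j < n \<Longrightarrow> dp n (e' i) (e j) = (if i = j then 1 else 0)"
    unfolding e_def e'_def by (rule eDB_dual) (use i0 ui in auto)
  have expH: "\<And>x p. x \<in> Hcar n \<Longrightarrow> x p = (\<Sum>k<n. dp n (e' k) x * e k p)"
    unfolding e_def e'_def by (rule expand_H) (use i0 ui sext in auto)
  have expD: "\<And>f p. f \<in> Hcar n \<Longrightarrow> f p = (\<Sum>k<n. dp n f (e k) * e' k p)"
    unfolding e_def e'_def by (rule expand_Hd) (use i0 ui sext in auto)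
  have e0: "e 0 = (\<lambda>k. s {k})" by (simp add: e_def eB_def)
  have q1: "dp n (e' 0) (\<lambda>k. s {k}) = 1" using dual[OF npos npos] e0 by simp
  have sann: "\<forall>x\<in>M. cliff n x s = (\<lambda>_. 0)"
  proof -
    have "s \<in> {(\<lambda>S. r * s S) | r. True}" by (rule CollectI, rule exI[of _ 1]) simp
    thus ?thesis unfolding ann[symmetric] by blast
  qed
  define hh where "hh j a = (if a < n then (\<Sum>i<n. e' j i * Lam s n (e' 0) a i) else 0)" for j a
  define X where "X k j = dp n (e' k) (hh j)" for k j
  let ?G = "Gfam n e e' X"
  have hhH: "hh j \<in> Hcar n" for j by (simp add: hh_def Hcar_def)
  have hhexp: "hh j p = X 0 j * e 0 p + (\<Sum>k\<in>{1..<n}. X k j * e k p)" for j p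
    using expH[OF hhH, of j p] sum_split0[OF npos, of "\<lambda>k. dp n (e' k) (hh j) * e k p"] unfolding X_def by simp
  have span: "\<forall>x\<in>M. \<exists>c. x = plc c ?G n"
  proof
    fix x assume xM: "x \<in> M"
    obtain f p where x: "x = (f, p)" by (cases x)
    have fH: "f \<in> Hcar n" and pH: "p \<in> Hcar n" using xM Msub x unfolding is_submod_def HHcar_def by auto
    have cl: "cliff n (f, p) s = (\<lambda>_. 0)" using sann xM x by simp
    have p0: "dp n p (e 0) = 0" using deg0_ann[OF cl] e0 by simp
    have E4: "(\<Sum>i<n. p i * Lam s n (e' 0) a i) = (\<Sum>j\<in>{1..<n}. dp n p (e j) * hh j a)" if a: "a < n" for a
    proof -
      have "(\<Sum>i<n. p i * Lam s n (e' 0) a i) = (\<Sum>i<n. (\<Sum>j<n. dp n p (e j) * e' j i) * Lam s n (e' 0) a i)"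
        by (rule sum.cong) (auto simp: expD[OF pH, symmetric])
      also have "\<dots> = (\<Sum>i<n. \<Sum>j<n. dp n p (e j) * (e' j i * Lam s n (e' 0) a i))"
        by (rule sum.cong[OF refl]) (simp add: sum_distrib_right sum_distrib_left mult_ac)
      also have "\<dots> = (\<Sum>j<n. \<Sum>i<n. dp n p (e j) * (e' j i * Lam s n (e' 0) a i))" by (rule sum.swap)
      also have "\<dots> = (\<Sum>j<n. dp n p (e j) * hh j a)" using a by (simp add: hh_def sum_distrib_left)
      also have "\<dots> = (\<Sum>j\<in>{1..<n}. dp n p (e j) * hh j a)" using sum_split0[OF npos, of "\<lambda>j. dp n p (e j) * hh j a"] p0 by simp
      finally show ?thesis .
    qed
    define c where "c k = (if k = 0 then dp n (e' 0) f + (\<Sum>j\<in>{1..<n}. dp n p (e j) * X 0 j) else dp n p (e k))" for k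
    have "x = plc c ?G n"
    proof (rule pair_eqI)
      fix q
      have L: "fst (plc c ?G n) q = c 0 * e 0 q + (\<Sum>k\<in>{1..<n}. dp n p (e k) * (\<Sum>j\<in>{1..<n}. X j k * e j q))"
        using sum_split0[OF npos, of "\<lambda>k. c k * fst (?G k) q"] by (simp add: Gfam_def c_def)
      show "fst x q = fst (plc c ?G n) q"
      proof (cases "q < n")
        case False
        have "e k q = 0" if "k < n" for k using eH[OF that] False by (simp add: Hcar_def)
        thus ?thesis unfolding L using fH False x npos by (simp add: Hcar_def)
      next
        case True
        have "f q = dp n (e' 0) f * s {q} + (\<Sum>j\<in>{1..<n}. dp n p (e j) * hh j q)"
          using coord_formula[OF cl True q1] E4[OF True] by simp
        also have "\<dots> = dp n (e' 0) f * e 0 q + (\<Sum>j\<in>{1..<n}. dp n p (e j) * (X 0 j * e 0 q + (\<Sum>k\<in>{1..<n}. X k j * e k q)))"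
          using e0 hhexp by simp
        also have "\<dots> = c 0 * e 0 q + (\<Sum>k\<in>{1..<n}. dp n p (e k) * (\<Sum>j\<in>{1..<n}. X j k * e j q))"
          by (simp add: c_def algebra_simps sum.distrib sum_distrib_left sum_distrib_right)
        finally show ?thesis using x L by simp
      qed
    next
      fix q
      have "snd (plc c ?G n) q = (\<Sum>k\<in>{1..<n}. dp n p (e k) * e' k q)"
        using sum_split0[OF npos, of "\<lambda>k. c k * snd (?G k) q"] by (simp add: Gfam_def c_def)
      also have "\<dots> = (\<Sum>k<n. dp n p (e k) * e' k q)" using sum_split0[OF npos, of "\<lambda>k. dp n p (e k) * e' k q"] p0 by simp
      also have "\<dots> = p q" using expD[OF pH] by simp
      finally show "snd x q = snd (plc c ?G n) q" using x by simp
    qed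
    thus "\<exists>c. x = plc c ?G n" by blast
  qed
  have GM: "\<forall>l<n. ?G l \<in> M" by (rule span_members_in_M[OF summand basis span])
  have skew: "\<forall>i\<in>{1..<n}. \<forall>j\<in>{1..<n}. X j i = - X i j"
  proof (intro ballI)
    fix i j assume i: "i \<in> {1..<n}" and j: "j \<in> {1..<n}"
    have dX: "dp n (e' a) (fst (?G l)) = X a l" if a: "a \<in> {1..<n}" and l: "l \<in> {1..<n}" for a l
    proof -
      have "dp n (e' a) (fst (?G l)) = (\<Sum>m\<in>{1..<n}. X m l * dp n (e' a) (e m))"
        using l by (simp add: Gfam_def dp_lincomb)
      also have "\<dots> = (\<Sum>m\<in>{1..<n}. if m = a then X m l else 0)"
        by (rule sum.cong) (use a in \<open>auto simp: dual\<close>)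
      also have "\<dots> = X a l" using a by simp
      finally show ?thesis .
    qed
    have "Bf n (?G i) (?G j) = 0" using Bf_zero_M[OF iso Msub] GM i j by auto
    moreover have "Bf n (?G i) (?G j) = X i j + X j i"
      using i j dX[OF i j] dX[OF j i] by (simp add: Bf_def Gfam_def)
    ultimately show "X j i = - X i j" by (simp add: eq_neg_iff_add_eq_0 add.commute)
  qed
  have Meq: "M = {plc c ?G n | c. True}"
  proof
    show "M \<subseteq> {plc c ?G n | c. True}" using span by blast
    show "{plc c ?G n | c. True} \<subseteq> M" using submod_plc[OF Msub GM] by blast
  qed
  have Hb: "is_Hbasis n e"
    unfolding is_Hbasis_def
  proof (intro conjI ballI allI impI)
    fix k assume "k < n" thus "e k \<in> Hcar n" by (rule eH)
  next
    fix x :: "nat \<Rightarrow> 'a" assume xH: "x \<in> Hcar n"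
    let ?c = "\<lambda>k. if k < n then dp n (e' k) x else 0"
    have ex: "(\<forall>k\<ge>n. ?c k = 0) \<and> x = vlc ?c e n"
      using expH[OF xH] by (auto simp: vlc_def fun_eq_iff intro!: sum.cong)
    have un: "c = ?c" if c: "(\<forall>k\<ge>n. c k = 0) \<and> x = vlc c e n" for c
    proof
      fix j show "c j = ?c j"
      proof (cases "j < n")
        case True
        have "dp n (e' j) x = (\<Sum>k<n. c k * dp n (e' j) (e k))"
          using c by (simp add: vlc_def dp_lincomb)
        also have "\<dots> = (\<Sum>k<n. if k = j then c k else 0)" by (rule sum.cong) (use True in \<open>auto simp: dual\<close>)
        also have "\<dots> = c j" using True by simp
        finally show ?thesis using True by simp
      qed (use c in auto)
    qed
    show "\<exists>!c. (\<forall>k\<ge>n. c k = 0) \<and> x = vlc c e n" by (rule ex1I[where P="\<lambda>c. (\<forall>k\<ge>n. c k = 0) \<and> x = vlc c e n" and a="?c", OF ex un])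
  qed
  have Db: "is_dual_basis n e e'"
    unfolding is_dual_basis_def using e'H dual by (auto simp: dp_def)
  show ?thesis by (intro exI[of _ e] exI[of _ e'] exI[of _ X] conjI Hb Db skew Meq)
qed

lemma detk_det: "detk k A = det (mk k A)"
proof -
  have "det (mk k A) = (\<Sum>p\<in>{p. p permutes {0..<k}}. signof p * (\<Prod>i=0..<k. mk k A $$ (i, p i)))"
    by (rule det_def'[OF mk_carrier])
  also have "\<dots> = (\<Sum>p\<in>{p. p permutes {..<k}}. of_int (sign p) * (\<Prod>i<k. A i (p i)))"
  proof (rule sum.cong)
    show "{p. p permutes {0..<k}} = {p. p permutes {..<k}}" by (simp add: atLeast0LessThan)
  next
    fix p assume "p \<in> {p. p permutes {..<k}}"
    hence p: "p permutes {..<k}" by simp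
    have pk: "\<And>x. x < k \<Longrightarrow> p x < k" using permutes_in_image[OF p] by auto
    have "(\<Prod>i=0..<k. mk k A $$ (i, p i)) = (\<Prod>i<k. A i (p i))"
      by (rule prod.cong) (auto simp: atLeast0LessThan pk)
    thus "signof p * (\<Prod>i=0..<k. mk k A $$ (i, p i)) = of_int (sign p) * (\<Prod>i<k. A i (p i))" by simp
  qed
  finally show ?thesis by (simp add: detk_def)
qed

lemma sorted_del:
  assumes "i < n" "a < n - 1"
  shows "sorted_list_of_set ({..<n} - {i}) ! a = (if a < i then a else Suc a)"
proof -
  have "sorted_list_of_set ({..<n} - {i}) = [0..<i] @ [Suc i..<n]"
  proof (rule sorted_distinct_set_unique)
    show "set (sorted_list_of_set ({..<n} - {i})) = set ([0..<i] @ [Suc i..<n])" using assms by auto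
  qed (auto simp: sorted_append)
  thus ?thesis using assms by (simp add: nth_append)
qed

lemma card_del: "i < n \<Longrightarrow> card ({..<n} - {i}) = n - 1"
  by simp

lemma ideal_unit:
  assumes "g \<in> G" "g dvd (1::'a::comm_ring_1)"
  shows "ideal_gen G = UNIV"
proof -
  from assms(2) obtain v where v: "1 = g * v" by (rule dvdE)
  have "x \<in> ideal_gen G" for x
  proof -
    have "(\<Sum>h\<in>{g}. (x * v) * h) = x * (g * v)" by (simp add: mult_ac)
    hence "x = (\<Sum>h\<in>{g}. (x * v) * h)" using v by simp
    thus ?thesis unfolding ideal_gen_def using assms(1)
      by (intro CollectI exI[of _ "{g}"] exI[of _ "\<lambda>h. x * v"]) simp
  qed
  thus ?thesis by blast
qed

lemma unit_factor: "a * b dvd (1::'a::comm_ring_1) \<Longrightarrow> b dvd 1"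
  by (rule dvd_mult_right)

lemma laplace_unit_row0:
  assumes loc: "local_ring TYPE('a::comm_ring_1)" and A: "(A::'a mat) \<in> carrier_mat n n" and n: "0 < n"
    and d: "det A dvd 1"
  shows "\<exists>j<n. det (mat_delete A 0 j) dvd 1"
proof -
  have "(\<Sum>j<n. A $$ (0,j) * cofactor A 0 j) dvd 1" using laplace_expansion_row[OF A n] d by simp
  then obtain j where j: "j < n" "cofactor A 0 j dvd 1"
    using local_sum_unit[OF loc, of "{..<n}" "\<lambda>j. A $$ (0,j) * cofactor A 0 j"] by auto
  hence "(-1)^(0+j) * det (mat_delete A 0 j) dvd 1" unfolding cofactor_def by simp
  hence "det (mat_delete A 0 j) dvd 1" by (rule unit_factor)
  thus ?thesis using j by blast
qed

lemma laplace_unit_col0: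
  assumes loc: "local_ring TYPE('a::comm_ring_1)" and A: "(A::'a mat) \<in> carrier_mat n n" and n: "0 < n"
    and d: "det A dvd 1"
  shows "\<exists>j<n. det (mat_delete A j 0) dvd 1"
proof -
  have "(\<Sum>j<n. A $$ (j,0) * cofactor A j 0) dvd 1" using laplace_expansion_column[OF A n] d by simp
  then obtain j where j: "j < n" "cofactor A j 0 dvd 1"
    using local_sum_unit[OF loc, of "{..<n}" "\<lambda>j. A $$ (j,0) * cofactor A j 0"] by auto
  hence "(-1)^(j+0) * det (mat_delete A j 0) dvd 1" unfolding cofactor_def by simp
  hence "det (mat_delete A j 0) dvd 1" by (rule unit_factor)
  thus ?thesis using j by blast
qed

lemma one_to_three:
  fixes M :: "((nat \<Rightarrow> 'a::comm_ring_1) \<times> (nat \<Rightarrow> 'a)) set"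
  assumes loc: "local_ring TYPE('a)"
    and summand: "is_direct_summand n M"
    and Hb: "is_Hbasis n e" and Db: "is_dual_basis n e e'"
    and Meq: "M = {plc c (Gfam n e e' X) n | c. True}"
    and npos: "0 < n"
    and basis: "is_pbasis M n b"
  shows "minor_ideal n (n - 1) (Pmatrix b) = UNIV"
proof -
  let ?G = "Gfam n e e' X"
  let ?N = "n - 1"
  have span: "\<forall>x\<in>M. \<exists>c. x = plc c ?G n" unfolding Meq by blast
  have bM: "\<forall>k<n. b k \<in> M" using basis unfolding is_pbasis_def by blast
  have "\<forall>k. \<exists>c. k < n \<longrightarrow> b k = plc c ?G n" using span bM by blast
  from choice[OF this] obtain C where C: "\<forall>k<n. b k = plc (C k) ?G n" by blast
  obtain D where D: "\<forall>k<n. \<forall>j<n. (\<Sum>l<n. C k l * D l j) = (if k = j then 1 else 0)"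
    using basis_change[OF summand basis C] by blast
  have "mk n C * mk n D = mk n (\<lambda>i j. if i = j then 1 else 0)"
  proof -
    have "mk n (\<lambda>i j. \<Sum>l<n. C i l * D l j) = mk n (\<lambda>i j. if i = j then 1 else 0)"
      unfolding mk_def using D by (intro eq_matI) auto
    thus ?thesis by (simp only: mk_mult)
  qed
  hence "det (mk n C) * det (mk n D) = 1" using mat_inv_comm(2)[of "mk n C" n "mk n D"] by (simp add: mk_one)
  hence dC: "det (mk n C) dvd 1" by (metis dvdI)
  let ?A1 = "mk n (\<lambda>l i. e' l i)"
  have "?A1 * mk n (\<lambda>i m. e m i) = mk n (\<lambda>i j. if i = j then 1 else 0)"
  proof -
    have "mk n (\<lambda>l m. \<Sum>i<n. e' l i * e m i) = mk n (\<lambda>i j. if i = j then 1 else 0)"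
      unfolding mk_def using Db unfolding is_dual_basis_def by (intro eq_matI) auto
    thus ?thesis by (simp only: mk_mult)
  qed
  hence "det ?A1 * det (mk n (\<lambda>i m. e m i)) = 1" using mat_inv_comm(2)[of ?A1 n] by (simp add: mk_one)
  hence dA: "det ?A1 dvd 1" by (metis dvdI)
  obtain i where i: "i < n" "det (mat_delete ?A1 0 i) dvd 1"
    using laplace_unit_row0[OF loc mk_carrier npos dA] by blast
  obtain j where j: "j < n" "det (mat_delete (mk n C) j 0) dvd 1"
    using laplace_unit_col0[OF loc mk_carrier npos dC] by blast
  let ?Ed = "mat_delete ?A1 0 i" and ?Cd = "mat_delete (mk n C) j 0"
  have Ed: "?Ed \<in> carrier_mat ?N ?N" "?Cd \<in> carrier_mat ?N ?N"
    by (auto simp: mat_delete_def mk_def)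
  let ?I = "{..<n} - {i}" and ?J = "{..<n} - {j}"
  let ?m = "detk ?N (\<lambda>a c. Pmatrix b (sorted_list_of_set ?I ! a) (sorted_list_of_set ?J ! c))"
  have P: "Pmatrix b p k = (\<Sum>l\<in>{1..<n}. C k l * e' l p)" if k: "k < n" for p k
  proof -
    have "Pmatrix b p k = (\<Sum>l<n. C k l * snd (?G l) p)" using C k by (simp add: Pmatrix_def)
    also have "\<dots> = (\<Sum>l\<in>{1..<n}. C k l * e' l p)"
      using sum_split0[OF npos, of "\<lambda>l. C k l * snd (?G l) p"] by (simp add: Gfam_def)
    finally show ?thesis .
  qed
  have "mk ?N (\<lambda>a c. Pmatrix b (sorted_list_of_set ?I ! a) (sorted_list_of_set ?J ! c)) = transpose_mat (?Cd * ?Ed)"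
  proof (rule eq_matI)
    fix a c assume a: "a < dim_row (transpose_mat (?Cd * ?Ed))" and c: "c < dim_col (transpose_mat (?Cd * ?Ed))"
    have a': "a < ?N" and c': "c < ?N" using a c Ed by auto
    let ?ia = "if a < i then a else Suc a" and ?jc = "if c < j then c else Suc c"
    have jc: "?jc < n" using c' by auto
    have "mk ?N (\<lambda>a c. Pmatrix b (sorted_list_of_set ?I ! a) (sorted_list_of_set ?J ! c)) $$ (a, c)
        = Pmatrix b ?ia ?jc" using a' c' i j by (simp add: sorted_del)
    also have "\<dots> = (\<Sum>l\<in>{1..<n}. C ?jc l * e' l ?ia)" using P[OF jc] .
    also have "\<dots> = (\<Sum>l<?N. C ?jc (Suc l) * e' (Suc l) ?ia)"
    proof -
      have nn: "n = Suc ?N" using npos by simp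
      have "(\<Sum>l\<in>{1..<n}. C ?jc l * e' l ?ia) = (\<Sum>l\<in>{Suc 0..<Suc ?N}. C ?jc l * e' l ?ia)"
        using nn by simp
      also have "\<dots> = (\<Sum>l\<in>{0..<?N}. C ?jc (Suc l) * e' (Suc l) ?ia)"
        by (rule sum.shift_bounds_Suc_ivl)
      finally show ?thesis by (simp add: atLeast0LessThan)
    qed
    also have "\<dots> = transpose_mat (?Cd * ?Ed) $$ (a, c)"
      using a' c' Ed by (simp add: mat_delete_def mk_def scalar_prod_def atLeast0LessThan)
    finally show "mk ?N (\<lambda>a c. Pmatrix b (sorted_list_of_set ?I ! a) (sorted_list_of_set ?J ! c)) $$ (a, c)
        = transpose_mat (?Cd * ?Ed) $$ (a, c)" .
  qed (use Ed in \<open>auto simp: mk_def\<close>)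
  hence "?m = det (transpose_mat (?Cd * ?Ed))" by (simp add: detk_det)
  also have "\<dots> = det (?Cd * ?Ed)" by (rule det_transpose[of _ ?N]) (use Ed in \<open>auto intro: mult_carrier_mat\<close>)
  also have "\<dots> = det ?Cd * det ?Ed" by (rule det_mult[OF Ed(2) Ed(1)])
  finally have mu: "?m dvd 1" using i(2) j(2) by simp
  have mG: "?m \<in> {detk ?N (\<lambda>a c. Pmatrix b (sorted_list_of_set I ! a) (sorted_list_of_set J ! c)) | I J.
        I \<subseteq> {..<n} \<and> J \<subseteq> {..<n} \<and> card I = ?N \<and> card J = ?N}"
    using i(1) j(1) by (intro CollectI exI[of _ ?I] exI[of _ ?J]) auto
  show ?thesis unfolding minor_ideal_def by (rule ideal_unit[OF mG mu])
qed

lemma plc_single: "k < m \<Longrightarrow> plc (\<lambda>l. if l = k then a else 0) K m = psmul a (K k)"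
  by (rule pair_eqI) (simp_all add: if_distrib[of "\<lambda>t. t * _"] cong: if_cong)

lemma plc_fam_cong: "(\<And>k. k < m \<Longrightarrow> K k = K' k) \<Longrightarrow> plc c K m = plc c K' m"
  by (rule pair_eqI) simp_all

lemma lf_padd: "lf n l1 l2 (padd x y) = lf n l1 l2 x + lf n l1 l2 y"
  by (simp add: lf_def algebra_simps sum.distrib)
lemma lf_psmul: "lf n l1 l2 (psmul r x) = r * lf n l1 l2 x"
  by (simp add: lf_def algebra_simps sum_distrib_left)

lemma nonunit_mult: "\<not> a dvd (1::'a::comm_ring_1) \<Longrightarrow> \<not> a * b dvd 1"
  using dvd_mult_left by blast

lemma local_nonunit_add: "local_ring TYPE('a::comm_ring_1) \<Longrightarrow> \<not> (a::'a) dvd 1 \<Longrightarrow> \<not> b dvd 1 \<Longrightarrow> \<not> (a + b) dvd 1"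
  unfolding local_ring_def by blast

lemma nonunit_neg: "\<not> (a::'a::comm_ring_1) dvd 1 \<Longrightarrow> \<not> (- a) dvd 1"
  by simp

lemma sum_list_split:
  fixes h :: "nat \<Rightarrow> 'a::comm_ring_1"
  assumes I: "I \<subseteq> {..<n}" "{..<n} - I = {a0}" and Il: "Il = sorted_list_of_set I"
  shows "(\<Sum>p<n. h p) = h a0 + (\<Sum>c<length Il. h (Il ! c))"
proof -
  have fin: "finite I" using I(1) finite_subset by blast
  have a0: "a0 \<notin> I" "{..<n} = insert a0 I" using I by auto
  have "(\<Sum>p<n. h p) = h a0 + sum h I" using a0 fin by simp
  also have "sum h I = sum_list (map h Il)"
    using Il fin by (simp add: sum.distinct_set_conv_list[symmetric])
  also have "\<dots> = (\<Sum>c<length Il. h (Il ! c))" by (simp add: sum_list_sum_nth atLeast0LessThan)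
  finally show ?thesis .
qed

lemma mat_entry_mult:
  assumes "A \<in> carrier_mat N N" "B \<in> carrier_mat N N" "a < N" "c < N"
  shows "(A * B) $$ (a, c) = (\<Sum>k<N. A $$ (a, k) * B $$ (k, c))"
  using assms by (simp add: scalar_prod_def atLeast0LessThan)

lemma three_to_two:
  fixes M :: "((nat \<Rightarrow> 'a::comm_ring_1) \<times> (nat \<Rightarrow> 'a)) set"
  assumes loc: "local_ring TYPE('a)" and half: "(2::'a) dvd 1"
    and summand: "is_direct_summand n M" and iso: "totally_isotropic n M"
    and basis: "is_pbasis M n b" and s_odd: "s \<in> ext_odd n"
    and ann: "{w \<in> ext_alg n. \<forall>x\<in>M. cliff n x w = (\<lambda>_. 0)} = {(\<lambda>S. r * s S) | r. True}"
    and npos: "0 < n"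
    and minor: "minor_ideal n (n - 1) (Pmatrix b) = UNIV"
  shows "\<exists>f'\<in>Hcar n. (\<Sum>i<n. f' i * s {i}) = 1"
proof -
  let ?N = "n - 1"
  have nN: "n = Suc ?N" using npos by simp
  have Msub: "is_submod n M" using summand unfolding is_direct_summand_def by blast
  have bM: "\<forall>k<n. b k \<in> M" using basis unfolding is_pbasis_def by blast
  let ?Gs = "{detk ?N (\<lambda>a c. Pmatrix b (sorted_list_of_set I ! a) (sorted_list_of_set J ! c)) | I J.
        I \<subseteq> {..<n} \<and> J \<subseteq> {..<n} \<and> card I = ?N \<and> card J = ?N}"
  have "(1::'a) \<in> ideal_gen ?Gs" using minor unfolding minor_ideal_def by simp
  then obtain F cc where F: "finite F" "F \<subseteq> ?Gs" "1 = (\<Sum>g\<in>F. cc g * g)"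
    unfolding ideal_gen_def by blast
  obtain g where g: "g \<in> F" "cc g * g dvd 1" using local_sum_unit[OF loc F(1), of "\<lambda>g. cc g * g"] F(3) by auto
  have gu: "g dvd 1" using g(2) by (rule dvd_mult_right)
  obtain I J where IJ: "g = detk ?N (\<lambda>a c. Pmatrix b (sorted_list_of_set I ! a) (sorted_list_of_set J ! c))"
    "I \<subseteq> {..<n}" "J \<subseteq> {..<n}" "card I = ?N" "card J = ?N" using F(2) g(1) by blast
  have "card ({..<n} - I) = 1" using IJ(2,4) npos by (simp add: card_Diff_subset finite_subset)
  then obtain a0 where a0: "{..<n} - I = {a0}" by (rule card_1_singletonE)
  have "card ({..<n} - J) = 1" using IJ(3,5) npos by (simp add: card_Diff_subset finite_subset)
  then obtain j0 where j0: "{..<n} - J = {j0}" by (rule card_1_singletonE)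
  have a0n: "a0 < n" "a0 \<notin> I" and j0n: "j0 < n" "j0 \<notin> J" using a0 j0 by auto
  define Il where "Il = sorted_list_of_set I"
  define Jl where "Jl = sorted_list_of_set J"
  have finI: "finite I" "finite J" using IJ(2,3) finite_subset by auto
  have lenI: "length Il = ?N" "length Jl = ?N" using IJ(4,5) by (simp_all add: Il_def Jl_def)
  have Iln: "Il ! a \<in> I" "Il ! a < n" "Il ! a \<noteq> a0" if "a < ?N" for a
  proof -
    show "Il ! a \<in> I" using that lenI finI by (metis Il_def nth_mem set_sorted_list_of_set)
    thus "Il ! a < n" "Il ! a \<noteq> a0" using IJ(2) a0n by auto
  qed
  have Jln: "Jl ! a \<in> J" "Jl ! a < n" "Jl ! a \<noteq> j0" if "a < ?N" for a
  proof -
    show "Jl ! a \<in> J" using that lenI finI by (metis Jl_def nth_mem set_sorted_list_of_set)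
    thus "Jl ! a < n" "Jl ! a \<noteq> j0" using IJ(3) j0n by auto
  qed
  have Ilinj: "Il ! a = Il ! a' \<longleftrightarrow> a = a'" if "a < ?N" "a' < ?N" for a a'
    using that lenI by (simp add: Il_def nth_eq_iff_index_eq)
  have Jcover: "\<exists>l<?N. k = Jl ! l" if "k < n" "k \<noteq> j0" for k
  proof -
    have "k \<in> J" using that j0 by auto
    hence "k \<in> set Jl" using finI by (simp add: Jl_def)
    thus ?thesis using lenI by (metis in_set_conv_nth)
  qed
  have Icover: "p = a0 \<or> (\<exists>c<?N. p = Il ! c)" if "p < n" for p
  proof (cases "p = a0")
    case False
    hence "p \<in> I" using that a0 by auto
    hence "p \<in> set Il" using finI by (simp add: Il_def)
    thus ?thesis using lenI by (metis in_set_conv_nth)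
  qed simp
  have sumsplit: "(\<Sum>p<n. h p) = h a0 + (\<Sum>c<?N. h (Il ! c))" for h :: "nat \<Rightarrow> 'a"
    using sum_list_split[OF IJ(2) a0 Il_def, of h] lenI by simp
  define A0 where "A0 a c = Pmatrix b (Il ! a) (Jl ! c)" for a c
  have A0e: "A0 = (\<lambda>a c. Pmatrix b (Il ! a) (Jl ! c))" by (simp add: fun_eq_iff A0_def)
  have gdet: "det (mk ?N A0) = g" using IJ(1) by (simp add: detk_det A0e Il_def Jl_def)
  from gu obtain gi where gi: "1 = g * gi" by (rule dvdE)
  define Binv where "Binv = gi \<cdot>\<^sub>m adj_mat (mk ?N A0)"
  have Bc: "Binv \<in> carrier_mat ?N ?N" unfolding Binv_def by (rule smult_carrier_mat[OF adj_mat(1)[OF mk_carrier]])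
  have AB: "mk ?N A0 * Binv = 1\<^sub>m ?N"
  proof -
    have "mk ?N A0 * Binv = gi \<cdot>\<^sub>m (mk ?N A0 * adj_mat (mk ?N A0))"
      unfolding Binv_def by (rule mult_smult_distrib[OF mk_carrier adj_mat(1)[OF mk_carrier]])
    also have "\<dots> = 1\<^sub>m ?N" unfolding adj_mat(2)[OF mk_carrier] gdet smult_smult_mat'
      using gi by (simp add: mult.commute one_smult_mat')
    finally show ?thesis .
  qed
  have BA: "Binv * mk ?N A0 = 1\<^sub>m ?N"
  proof -
    have "Binv * mk ?N A0 = gi \<cdot>\<^sub>m (adj_mat (mk ?N A0) * mk ?N A0)"
      unfolding Binv_def by (rule mult_smult_assoc_mat[OF adj_mat(1)[OF mk_carrier] mk_carrier])
    also have "\<dots> = 1\<^sub>m ?N" unfolding adj_mat(3)[OF mk_carrier] gdet smult_smult_mat'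
      using gi by (simp add: mult.commute one_smult_mat')
    finally show ?thesis .
  qed
  define Bi where "Bi l c = Binv $$ (l, c)" for l c
  have ABf: "(\<Sum>k<?N. A0 a k * Bi k c) = (if a = c then 1 else 0)" if "a < ?N" "c < ?N" for a c
    using arg_cong[OF AB, of "\<lambda>X. X $$ (a,c)"] mat_entry_mult[OF mk_carrier Bc that] that
    by (simp add: Bi_def)
  have BAf: "(\<Sum>k<?N. Bi a k * A0 k c) = (if a = c then 1 else 0)" if "a < ?N" "c < ?N" for a c
    using arg_cong[OF BA, of "\<lambda>X. X $$ (a,c)"] mat_entry_mult[OF Bc mk_carrier that] that
    by (simp add: Bi_def)
  define g' where "g' c = plc (\<lambda>l. Bi l c) (\<lambda>l. b (Jl ! l)) ?N" for c
  define g'' where "g'' = padd (b j0) (psmul (-1) (plc (\<lambda>c. Pmatrix b (Il ! c) j0) g' ?N))"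
  have bJM: "\<forall>l<?N. b (Jl ! l) \<in> M" using bM Jln by blast
  have g'M: "g' c \<in> M" for c unfolding g'_def by (rule submod_plc[OF Msub bJM])
  have g''M: "g'' \<in> M"
  proof -
    have "plc (\<lambda>c. Pmatrix b (Il ! c) j0) g' ?N \<in> M" using submod_plc[OF Msub] g'M by blast
    thus ?thesis unfolding g''_def using Msub bM j0n unfolding is_submod_def by blast
  qed
  have snd_g': "snd (g' c) (Il ! a) = (if a = c then 1 else 0)" if "a < ?N" "c < ?N" for a c
  proof -
    have "snd (g' c) (Il ! a) = (\<Sum>l<?N. A0 a l * Bi l c)"
      by (simp add: g'_def A0_def Pmatrix_def mult.commute)
    thus ?thesis using ABf[OF that] by simp
  qed
  have snd_g''I: "snd g'' (Il ! a) = 0" if a: "a < ?N" for a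
  proof -
    have "(\<Sum>c<?N. Pmatrix b (Il ! c) j0 * snd (g' c) (Il ! a)) = (\<Sum>c<?N. if c = a then Pmatrix b (Il ! c) j0 else 0)"
      by (rule sum.cong) (use a snd_g' in auto)
    also have "\<dots> = Pmatrix b (Il ! a) j0" using a by simp
    finally show ?thesis by (simp add: g''_def Pmatrix_def)
  qed
  define z where "z = snd g'' a0"
  have g''H: "fst g'' \<in> Hcar n" "snd g'' \<in> Hcar n" using g''M Msub unfolding is_submod_def HHcar_def
    by (auto simp: mem_Times_iff)
  have snd_g'': "snd g'' p = (if p = a0 then z else 0)" for p
  proof (cases "p < n")
    case True
    show ?thesis using Icover[OF True] snd_g''I a0n z_def Iln by (auto)
  next
    case False thus ?thesis using g''H a0n by (auto simp: Hcar_def)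
  qed
  define W where "W k = (if k < ?N then g' k else g'')" for k
  have WM: "\<forall>k<n. W k \<in> M" using g'M g''M by (simp add: W_def)
  have Wtrunc: "plc c W n = padd (plc c g' ?N) (psmul (c ?N) g'')" for c
  proof -
    have "plc c W n = padd (plc c W ?N) (psmul (c ?N) (W ?N))" using nN plc_Suc by metis
    moreover have "plc c W ?N = plc c g' ?N" by (rule plc_fam_cong) (simp add: W_def)
    ultimately show ?thesis by (simp add: W_def)
  qed
  have spanW: "\<forall>x\<in>M. \<exists>c. x = plc c W n"
  proof (rule span_trans[OF pbasis_span[OF basis]], intro allI impI)
    fix k assume k: "k < n"
    show "\<exists>d. b k = plc d W n"
    proof (cases "k = j0")
      case True
      let ?d = "\<lambda>c. if c < ?N then Pmatrix b (Il ! c) j0 else 1"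
      have "plc ?d g' ?N = plc (\<lambda>c. Pmatrix b (Il ! c) j0) g' ?N" by (rule plc_cong) simp
      hence "plc ?d W n = b j0" unfolding Wtrunc g''_def by (intro pair_eqI) (simp_all del: fst_plc snd_plc)
      thus ?thesis using True by metis
    next
      case False
      then obtain l where l: "l < ?N" "k = Jl ! l" using Jcover k by blast
      let ?d = "\<lambda>c. if c < ?N then A0 c l else 0"
      have "plc ?d g' ?N = plc (\<lambda>c. A0 c l) (\<lambda>c. plc (\<lambda>l'. Bi l' c) (\<lambda>l'. b (Jl ! l')) ?N) ?N"
        unfolding g'_def by (rule plc_cong) simp
      also have "\<dots> = plc (\<lambda>l'. \<Sum>c<?N. A0 c l * Bi l' c) (\<lambda>l'. b (Jl ! l')) ?N" by (rule plc_plc)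
      also have "\<dots> = plc (\<lambda>l'. if l' = l then 1 else 0) (\<lambda>l'. b (Jl ! l')) ?N"
        by (rule plc_cong) (use BAf l in \<open>auto simp: mult.commute\<close>)
      also have "\<dots> = b k" using plc_unit[OF l(1)] l by simp
      finally have "plc ?d W n = b k" unfolding Wtrunc by (intro pair_eqI) (simp_all del: fst_plc snd_plc)
      thus ?thesis by metis
    qed
  qed
  obtain L1 L2 where L: "\<forall>j<n. \<forall>k<n. lf n (L1 j) (L2 j) (b k) = (if j = k then 1 else 0)"
    using coord_functional[OF summand basis] by blast
  have lfg': "lf n (L1 j0) (L2 j0) (g' c) = 0" for c
  proof -
    have "lf n (L1 j0) (L2 j0) (g' c) = (\<Sum>l<?N. Bi l c * lf n (L1 j0) (L2 j0) (b (Jl ! l)))"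
      unfolding g'_def by (rule lf_plc)
    also have "\<dots> = 0" using L j0n Jln by (auto intro!: sum.neutral)
    finally show ?thesis .
  qed
  have lfg'': "lf n (L1 j0) (L2 j0) g'' = 1"
    unfolding g''_def lf_padd lf_psmul lf_plc using L j0n lfg' by simp
  have s0: "s {} = 0" by (rule s_empty_zero[OF s_odd])
  have sext: "s \<in> ext_alg n" using s_odd unfolding ext_odd_def by blast
  define w :: "nat set \<Rightarrow> 'a" where "w = wedges n (\<lambda>c. if c < ?N then eps (Il ! c) else eps a0) delta0 n"
  have wext: "w \<in> ext_alg n" unfolding w_def by (rule wedges_ext[OF delta0_ext])
  show ?thesis
  proof (cases "z dvd 1")
    case True
    then obtain zi where zi: "1 = z * zi" by (rule dvdE)
    define K where "K k = (if k < ?N then g' k else psmul zi g'')" for k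
    have KM: "\<forall>k<n. K k \<in> M" using g'M g''M Msub unfolding K_def is_submod_def by auto
    have spanK: "\<forall>x\<in>M. \<exists>c. x = plc c K n"
    proof (rule span_trans[OF spanW], intro allI impI)
      fix k assume k: "k < n"
      show "\<exists>d. W k = plc d K n"
      proof (cases "k < ?N")
        case True thus ?thesis using plc_unit[OF k, of K]
          by (intro exI[of _ "\<lambda>l. if l = k then 1 else 0"]) (simp add: W_def K_def)
      next
        case False
        hence kN: "k = ?N" using k by simp
        have "plc (\<lambda>l. if l = ?N then z else 0) K n = psmul z (K ?N)" by (rule plc_single) (use npos in simp)
        also have "\<dots> = g''" unfolding K_def using zi by (intro pair_eqI) (simp_all add: mult.assoc[symmetric] mult.commute[of z])
        finally show ?thesis using kN by (intro exI[of _ "\<lambda>l. if l = ?N then z else 0"]) (simp add: W_def)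
      qed
    qed
    obtain r where r: "ops n K n w = (\<lambda>S. r * s S)"
      using spinor_of[OF half iso Msub ann KM spanK wext] by blast
    have "ops n K n w {} = 1" unfolding w_def
    proof (rule ops_wedges_empty, intro allI impI)
      fix j i assume j: "j < n" and i: "i \<le> j"
      show "dp n (snd (K j)) (if i < ?N then eps (Il ! i) else eps a0) = (if i = j then 1 else 0)"
      proof (cases "j < ?N")
        case True
        hence "i < ?N" using i by simp
        thus ?thesis using True by (simp add: K_def dp_eps' Iln snd_g')
      next
        case False
        hence jN: "j = ?N" using j by simp
        show ?thesis
        proof (cases "i < ?N")
          case True thus ?thesis using jN Iln[OF True] by (simp add: K_def dp_eps' snd_g'')
        next
          case False
          hence "i = ?N" using i jN by simp
          thus ?thesis using jN a0n zi by (simp add: K_def dp_eps' snd_g'' mult.commute)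
        qed
      qed
    qed
    hence "(1::'a) = 0" using r s0 by (metis mult_zero_right)
    thus ?thesis using local_01[OF loc] by simp
  next
    case False
    have zn: "\<not> z dvd 1" by (rule False)
    have "(\<Sum>i<n. L1 j0 i * fst g'' i + L2 j0 i * snd g'' i) dvd 1" using lfg'' by (simp add: lf_def)
    then obtain i where i: "i < n" "(L1 j0 i * fst g'' i + L2 j0 i * snd g'' i) dvd 1"
      using local_sum_unit[OF loc, of "{..<n}" "\<lambda>i. L1 j0 i * fst g'' i + L2 j0 i * snd g'' i"] by auto
    have "\<not> L2 j0 i * snd g'' i dvd 1"
      using zn zero_not_unit[OF loc] by (auto simp: snd_g'' dest: dvd_mult_right)
    hence "L1 j0 i * fst g'' i dvd 1" using local_add[OF loc i(2)] by blast
    hence fi: "fst g'' i dvd 1" by (rule dvd_mult_right)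
    have u0: "fst g'' a0 dvd 1"
    proof (rule ccontr)
      assume nu: "\<not> fst g'' a0 dvd 1"
      have "\<not> fst g'' (Il ! c) dvd 1" if c: "c < ?N" for c
      proof -
        have B0: "Bf n g'' (g' c) = 0" using Bf_zero_M[OF iso Msub g''M g'M] .
        have d1: "dp n (snd g'') (fst (g' c)) = z * fst (g' c) a0"
          using a0n by (simp add: dp_def snd_g'' if_distrib[of "\<lambda>t. t * _"] cong: if_cong)
        have d2: "dp n (snd (g' c)) (fst g'') = snd (g' c) a0 * fst g'' a0 + fst g'' (Il ! c)"
        proof -
          have "dp n (snd (g' c)) (fst g'') = snd (g' c) a0 * fst g'' a0 + (\<Sum>d<?N. snd (g' c) (Il ! d) * fst g'' (Il ! d))"
            unfolding dp_def by (rule sumsplit)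
          also have "(\<Sum>d<?N. snd (g' c) (Il ! d) * fst g'' (Il ! d)) = (\<Sum>d<?N. if d = c then fst g'' (Il ! d) else 0)"
            by (rule sum.cong) (use c snd_g' in auto)
          also have "\<dots> = fst g'' (Il ! c)" using c by simp
          finally show ?thesis .
        qed
        have e: "fst g'' (Il ! c) = - (z * fst (g' c) a0 + snd (g' c) a0 * fst g'' a0)"
          using B0 d1 d2 unfolding Bf_def by (simp add: eq_neg_iff_add_eq_0 algebra_simps)
        have "\<not> (z * fst (g' c) a0 + snd (g' c) a0 * fst g'' a0) dvd 1"
          using local_nonunit_add[OF loc nonunit_mult[OF zn] nonunit_mult[OF nu, of "snd (g' c) a0", unfolded mult.commute[of "fst g'' a0"]]] .
        hence "\<not> (- (z * fst (g' c) a0 + snd (g' c) a0 * fst g'' a0)) dvd 1" by (rule nonunit_neg)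
        thus ?thesis unfolding e .
      qed
      thus False using fi Icover[OF i(1)] nu by auto
    qed
    then obtain ui where ui: "1 = fst g'' a0 * ui" by (rule dvdE)
    have "Qform n g'' = z * fst g'' a0"
      using a0n by (simp add: Qform_def snd_g'' if_distrib[of "\<lambda>t. t * _"] cong: if_cong)
    moreover have "Qform n g'' = 0" using iso g''M unfolding totally_isotropic_def by blast
    ultimately have "z * fst g'' a0 = 0" by simp
    hence "z * fst g'' a0 * ui = 0" by simp
    hence z0: "z = 0" using ui by (simp add: mult.assoc)
    have sg''0: "snd g'' = (\<lambda>_. 0)" using z0 by (simp add: fun_eq_iff snd_g'')
    define K where "K k = (if k = 0 then g'' else g' (k - 1))" for k
    have KM: "\<forall>k<n. K k \<in> M" using g'M g''M by (simp add: K_def)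
    have spanK: "\<forall>x\<in>M. \<exists>c. x = plc c K n"
    proof (rule span_trans[OF spanW], intro allI impI)
      fix k assume k: "k < n"
      show "\<exists>d. W k = plc d K n"
      proof (cases "k < ?N")
        case True
        have "Suc k < n" using True by simp
        thus ?thesis using plc_unit[of "Suc k" n K] True
          by (intro exI[of _ "\<lambda>l. if l = Suc k then 1 else 0"]) (simp add: W_def K_def)
      next
        case False thus ?thesis using plc_unit[OF npos, of K]
          by (intro exI[of _ "\<lambda>l. if l = 0 then 1 else 0"]) (simp add: W_def K_def)
      qed
    qed
    define w' :: "nat set \<Rightarrow> 'a" where "w' = wedges n (\<lambda>c. eps (Il ! c)) delta0 ?N"
    have wext': "w' \<in> ext_alg n" unfolding w'_def by (rule wedges_ext[OF delta0_ext])
    obtain r where r: "ops n K n w' = (\<lambda>S. r * s S)"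
      using spinor_of[OF half iso Msub ann KM spanK wext'] by blast
    let ?y = "ops n g' ?N w'"
    have sh: "ops n K n w' = cliff n g'' ?y"
    proof -
      have "ops n K n w' = cliff n (K 0) (ops n (\<lambda>j. K (Suc j)) ?N w')" using ops_shift nN by metis
      moreover have "(\<lambda>j. K (Suc j)) = g'" by (simp add: K_def fun_eq_iff)
      ultimately show ?thesis by (simp add: K_def)
    qed
    have y0: "?y {} = 1" unfolding w'_def
    proof (rule ops_wedges_empty, intro allI impI)
      fix j i assume j: "j < ?N" and i: "i \<le> j"
      hence "i < ?N" by simp
      thus "dp n (snd (g' j)) (eps (Il ! i)) = (if i = j then 1 else 0)" using j by (simp add: dp_eps' Iln snd_g')
    qed
    have "r * s {a0} = cliff n g'' ?y {a0}" using r sh by metis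
    also have "\<dots> = fst g'' a0" using a0n y0 sg''0 by (simp add: cliff_def wedge1_single)
    finally have "r * s {a0} dvd 1" using u0 by simp
    thus ?thesis by (rule cond2_of_unit[OF a0n(1)])
  qed
qed

theorem mainTheorem6:
  fixes n :: nat
    and M :: "((nat \<Rightarrow> 'a::comm_ring_1) \<times> (nat \<Rightarrow> 'a)) set"
    and s :: "nat set \<Rightarrow> 'a"
  assumes local: "local_ring TYPE('a)"
    and half: "(2::'a) dvd 1"
    and summand: "is_direct_summand n M"
    and isotropic: "totally_isotropic n M"
    and rank: "\<exists>b. is_pbasis M n b"
    and s_odd: "s \<in> ext_odd n"
    and ann: "{w \<in> ext_alg n. \<forall>x\<in>M. cliff n x w = (\<lambda>_. 0)} = {(\<lambda>S. r * s S) | r. True}"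
  shows "((\<exists>e e' X. is_Hbasis n e \<and> is_dual_basis n e e' \<and>
              (\<forall>i\<in>{1..<n}. \<forall>j\<in>{1..<n}. X j i = - X i j) \<and>
              M = {plc c (\<lambda>i. if i = 0 then (e 0, \<lambda>_. 0)
                              else (\<lambda>k. \<Sum>j\<in>{1..<n}. X j i * e j k, e' i)) n | c. True})
          \<longleftrightarrow> {(\<Sum>i<n. f' i * s {i}) | f'. f' \<in> Hcar n} = UNIV)
       \<and> ({(\<Sum>i<n. f' i * s {i}) | f'. f' \<in> Hcar n} = UNIV
          \<longleftrightarrow> (\<forall>b. is_pbasis M n b \<longrightarrow> minor_ideal n (n - 1) (Pmatrix b) = UNIV))"
proof -
  have npos: "0 < n" by (rule n_pos[OF local s_odd ann])
  obtain b0 where b0: "is_pbasis M n b0" using rank by blast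
  have sext: "s \<in> ext_alg n" using s_odd unfolding ext_odd_def by blast
  let ?C1 = "\<exists>e e' X. is_Hbasis n e \<and> is_dual_basis n e e' \<and>
              (\<forall>i\<in>{1..<n}. \<forall>j\<in>{1..<n}. X j i = - X i j) \<and>
              M = {plc c (Gfam n e e' X) n | c. True}"
  let ?C2 = "\<exists>f'\<in>Hcar n. (\<Sum>i<n. f' i * s {i}) = 1"
  let ?C3 = "\<forall>b. is_pbasis M n b \<longrightarrow> minor_ideal n (n - 1) (Pmatrix b) = UNIV"
  have c12: "?C1 \<Longrightarrow> ?C2"
  proof -
    assume ?C1
    then obtain e e' X where ex: "is_Hbasis n e" "is_dual_basis n e e'"
      "M = {plc c (Gfam n e e' X) n | c. True}" by blast
    show ?C2 by (rule one_to_two[OF half summand isotropic ann ex(2) ex(3) npos])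
  qed
  have c21: "?C2 \<Longrightarrow> ?C1"
  proof -
    assume ?C2
    then obtain f' where f': "f' \<in> Hcar n" "(\<Sum>i<n. f' i * s {i}) = 1" by blast
    show ?C1 by (rule two_to_one[OF local half summand isotropic b0 sext ann f'])
  qed
  have c13: "?C1 \<Longrightarrow> ?C3"
  proof -
    assume ?C1
    then obtain e e' X where ex: "is_Hbasis n e" "is_dual_basis n e e'"
      "M = {plc c (Gfam n e e' X) n | c. True}" by blast
    show ?C3 using one_to_three[OF local summand ex npos] by blast
  qed
  have c32: "?C3 \<Longrightarrow> ?C2"
  proof -
    assume ?C3
    hence "minor_ideal n (n - 1) (Pmatrix b0) = UNIV" using b0 by blast
    thus ?C2 by (rule three_to_two[OF local half summand isotropic b0 s_odd ann npos])
  qed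
  have "(?C1 \<longleftrightarrow> ?C2) \<and> (?C2 \<longleftrightarrow> ?C3)" using c12 c21 c13 c32 by blast
  thus ?thesis unfolding cond2_iff Gfam_def .
qed

end
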